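(* Let $(\mathcal A,\phi)$ be a noncommutative probability space and $\mathcal F$ its free exchangeability system. If $\pi\in\Pi_n$ has a crossing, then $K^{\mathcal F}_\pi(X_1,\dots,X_n)=0$ for all $X_1,\dots,X_n\in\mathcal A$.
   Context: A noncommutative probability space is a pair $(\mathcal A,\phi)$ of a complex unital algebra $\mathcal A$ and a unital linear functional $\phi$. The free exchangeability system $\mathcal F$: $\mathcal U$ is the (unital, algebraic) free product of countably many copies $\mathcal A_k$, $k\in\mathbb N$, of $\mathcal A$, $\tilde\phi$ is the free product functional of copies of $\phi$ (characterized by $\tilde\phi(1)=1$, $\tilde\phi$ restricting to $\phi$ on each copy, and $\tilde\phi(a_1\cdots a_m)=0$ whenever $a_j\in\mathcal A_{k_j}$, $k_j\ne k_{j+1}$, $\tilde\phi(a_j)=0$), and $X\mapsto X^{(k)}$ is the inclusion of the $k$-th copy. For a partition $\sigma$ of $[n]$, $\phi^{\mathcal F}_\sigma(X_1,\dots,X_n)=\tilde\phi(X_1^{(i_1)}\cdots X_n^{(i_n)})$ for any indices with $i_j=i_l\iff j,l$ lie in the same block of $\sigma$. $K^{\mathcal F}_\pi=\sum_{\sigma\le\pi}\phi^{\mathcal F}_\sigma\,\mu(\sigma,\pi)$ with $\mu$ the Möbius function of the set-partition lattice $\Pi_n$ ordered by refinement. $\pi$ has a crossing if there exist $i<j<k<l$ with $i,k$ in one block and $j,l$ in a different block. *)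

theory Defs
  imports Complex_Main "HOL-Library.Disjoint_Sets"
begin

section \<open>Complex unital algebras, encoded as a ring_1 type with a complex scalar action\<close>

definition cplx_algebra :: "(complex \<Rightarrow> 'a::ring_1 \<Rightarrow> 'a) \<Rightarrow> bool" where
  "cplx_algebra sm \<longleftrightarrow>
     (\<forall>c x y. sm c (x + y) = sm c x + sm c y) \<and>
     (\<forall>c d x. sm (c + d) x = sm c x + sm d x) \<and>
     (\<forall>c d x. sm (c * d) x = sm c (sm d x)) \<and>
     (\<forall>x. sm 1 x = x) \<and>
     (\<forall>c x y. sm c (x * y) = sm c x * y) \<and>
     (\<forall>c x y. sm c (x * y) = x * sm c y)"

definition unital_lin_functional ::
  "(complex \<Rightarrow> 'a::ring_1 \<Rightarrow> 'a) \<Rightarrow> ('a \<Rightarrow> complex) \<Rightarrow> bool" where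
  "unital_lin_functional sm f \<longleftrightarrow>
     (\<forall>x y. f (x + y) = f x + f y) \<and> (\<forall>c x. f (sm c x) = c * f x) \<and> f 1 = 1"

definition unital_alg_hom ::
  "(complex \<Rightarrow> 'a::ring_1 \<Rightarrow> 'a) \<Rightarrow> (complex \<Rightarrow> 'b::ring_1 \<Rightarrow> 'b) \<Rightarrow> ('a \<Rightarrow> 'b) \<Rightarrow> bool" where
  "unital_alg_hom smA smB h \<longleftrightarrow>
     (\<forall>x y. h (x + y) = h x + h y) \<and> (\<forall>x y. h (x * y) = h x * h y) \<and>
     (\<forall>c x. h (smA c x) = smB c (h x)) \<and> h 1 = 1"

inductive_set alg_generated ::
  "(complex \<Rightarrow> 'b::ring_1 \<Rightarrow> 'b) \<Rightarrow> 'b set \<Rightarrow> 'b set" for sm S where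
  gen_base: "x \<in> S \<Longrightarrow> x \<in> alg_generated sm S"
| gen_one: "1 \<in> alg_generated sm S"
| gen_add: "x \<in> alg_generated sm S \<Longrightarrow> y \<in> alg_generated sm S \<Longrightarrow> x + y \<in> alg_generated sm S"
| gen_mult: "x \<in> alg_generated sm S \<Longrightarrow> y \<in> alg_generated sm S \<Longrightarrow> x * y \<in> alg_generated sm S"
| gen_smul: "x \<in> alg_generated sm S \<Longrightarrow> sm c x \<in> alg_generated sm S"

text \<open>\<open>free_exch_system smA phi smU psi iota\<close>: the complex unital algebra \<open>U\<close> (type \<open>'u\<close>,
 scalar action \<open>smU\<close>) is generated by the countably many copies \<open>iota k\<close> (\<open>k \<in> nat\<close>)
 of \<open>A\<close>, and \<open>psi\<close> is the free product functional of the copies of \<open>phi\<close>: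
 \<open>psi 1 = 1\<close>, \<open>psi\<close> restricts to \<open>phi\<close> on each copy, and \<open>psi\<close> vanishes on alternating
 products of centred elements.\<close>
definition free_exch_system ::
  "(complex \<Rightarrow> 'a::ring_1 \<Rightarrow> 'a) \<Rightarrow> ('a \<Rightarrow> complex) \<Rightarrow>
   (complex \<Rightarrow> 'u::ring_1 \<Rightarrow> 'u) \<Rightarrow> ('u \<Rightarrow> complex) \<Rightarrow> (nat \<Rightarrow> 'a \<Rightarrow> 'u) \<Rightarrow> bool" where
  "free_exch_system smA phi smU psi iota \<longleftrightarrow>
     cplx_algebra smU \<and> unital_lin_functional smU psi \<and>
     (\<forall>k. unital_alg_hom smA smU (iota k)) \<and>
     alg_generated smU (\<Union>k. range (iota k)) = UNIV \<and>
     (\<forall>k a. psi (iota k a) = phi a) \<and>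
     (\<forall>ks as. ks \<noteq> [] \<longrightarrow> length as = length ks \<longrightarrow>
        (\<forall>j. Suc j < length ks \<longrightarrow> ks ! j \<noteq> ks ! Suc j) \<longrightarrow>
        (\<forall>a\<in>set as. phi a = 0) \<longrightarrow>
        psi (prod_list (map2 iota ks as)) = 0)"

definition set_partitions :: "nat \<Rightarrow> nat set set set" where
  "set_partitions n = {P. partition_on {1..n} P}"

definition refines :: "'b set set \<Rightarrow> 'b set set \<Rightarrow> bool" where
  "refines \<sigma> \<pi> \<longleftrightarrow> (\<forall>B\<in>\<sigma>. \<exists>C\<in>\<pi>. B \<subseteq> C)"

definition moebius :: "'c set \<Rightarrow> ('c \<Rightarrow> 'c \<Rightarrow> bool) \<Rightarrow> 'c \<Rightarrow> 'c \<Rightarrow> int" where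
  "moebius P le = (THE m.
     (\<forall>x y. \<not> (x \<in> P \<and> y \<in> P \<and> le x y) \<longrightarrow> m x y = 0) \<and>
     (\<forall>x\<in>P. \<forall>y\<in>P. le x y \<longrightarrow>
        (\<Sum>z\<in>{z\<in>P. le x z \<and> le z y}. m x z) = (if x = y then 1 else 0)))"

definition moebius_part :: "nat \<Rightarrow> nat set set \<Rightarrow> nat set set \<Rightarrow> int" where
  "moebius_part n = moebius (set_partitions n) refines"

definition has_crossing :: "nat set set \<Rightarrow> bool" where
  "has_crossing \<pi> \<longleftrightarrow> (\<exists>i j k l. i < j \<and> j < k \<and> k < l \<and>
      (\<exists>B\<in>\<pi>. \<exists>C\<in>\<pi>. B \<noteq> C \<and> i \<in> B \<and> k \<in> B \<and> j \<in> C \<and> l \<in> C))"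

text \<open>Index assignment realising a partition: position \<open>j\<close> gets the least element of its
 block, so \<open>i_j = i_l\<close> iff \<open>j,l\<close> lie in the same block.\<close>
definition block_index :: "nat set set \<Rightarrow> nat \<Rightarrow> nat" where
  "block_index \<sigma> j = Min (THE B. B \<in> \<sigma> \<and> j \<in> B)"

definition phiF :: "(nat \<Rightarrow> 'a \<Rightarrow> 'u::ring_1) \<Rightarrow> ('u \<Rightarrow> complex) \<Rightarrow>
    nat \<Rightarrow> nat set set \<Rightarrow> (nat \<Rightarrow> 'a) \<Rightarrow> complex" where
  "phiF iota psi n \<sigma> X = psi (prod_list (map (\<lambda>j. iota (block_index \<sigma> j) (X j)) [1..<Suc n]))"

definition KF :: "(nat \<Rightarrow> 'a \<Rightarrow> 'u::ring_1) \<Rightarrow> ('u \<Rightarrow> complex) \<Rightarrow>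
    nat \<Rightarrow> nat set set \<Rightarrow> (nat \<Rightarrow> 'a) \<Rightarrow> complex" where
  "KF iota psi n \<pi> X = (\<Sum>\<sigma>\<in>{\<sigma>\<in>set_partitions n. refines \<sigma> \<pi>}.
       phiF iota psi n \<sigma> X * of_int (moebius_part n \<sigma> \<pi>))"

end

theory Submission
  imports Defs
begin

definition porder :: "'c set \<Rightarrow> ('c \<Rightarrow> 'c \<Rightarrow> bool) \<Rightarrow> bool" where
  "porder P le \<longleftrightarrow> (\<forall>x\<in>P. le x x) \<and> (\<forall>x\<in>P. \<forall>y\<in>P. \<forall>z\<in>P. le x y \<longrightarrow> le y z \<longrightarrow> le x z)
     \<and> (\<forall>x\<in>P. \<forall>y\<in>P. le x y \<longrightarrow> le y x \<longrightarrow> x = y)"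

lemma porderD:
  assumes "porder P le"
  shows "x \<in> P \<Longrightarrow> le x x"
    and "x \<in> P \<Longrightarrow> y \<in> P \<Longrightarrow> z \<in> P \<Longrightarrow> le x y \<Longrightarrow> le y z \<Longrightarrow> le x z"
    and "x \<in> P \<Longrightarrow> y \<in> P \<Longrightarrow> le x y \<Longrightarrow> le y x \<Longrightarrow> x = y"
proof -
  have abc: "(\<forall>x\<in>P. le x x) \<and> (\<forall>x\<in>P. \<forall>y\<in>P. \<forall>z\<in>P. le x y \<longrightarrow> le y z \<longrightarrow> le x z)
    \<and> (\<forall>x\<in>P. \<forall>y\<in>P. le x y \<longrightarrow> le y x \<longrightarrow> x = y)"
    using assms unfolding porder_def .
  note a = conjunct1[OF abc] and b = conjunct1[OF conjunct2[OF abc]] and c = conjunct2[OF conjunct2[OF abc]]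
  show "x \<in> P \<Longrightarrow> le x x" using a by (rule bspec)
  show "x \<in> P \<Longrightarrow> y \<in> P \<Longrightarrow> z \<in> P \<Longrightarrow> le x y \<Longrightarrow> le y z \<Longrightarrow> le x z"
    using b by (elim ballE impE) auto
  show "x \<in> P \<Longrightarrow> y \<in> P \<Longrightarrow> le x y \<Longrightarrow> le y x \<Longrightarrow> x = y"
    using c by (elim ballE impE) auto
qed

definition ivl :: "'c set \<Rightarrow> ('c \<Rightarrow> 'c \<Rightarrow> bool) \<Rightarrow> 'c \<Rightarrow> 'c \<Rightarrow> 'c set" where
  "ivl P le x y = {z\<in>P. le x z \<and> le z y}"

primrec mobf :: "nat \<Rightarrow> 'c set \<Rightarrow> ('c \<Rightarrow> 'c \<Rightarrow> bool) \<Rightarrow> 'c \<Rightarrow> 'c \<Rightarrow> int" where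
  "mobf 0 P le x y = 0"
| "mobf (Suc k) P le x y = (if x \<in> P \<and> y \<in> P \<and> le x y then
     (if x = y then 1 else - (\<Sum>z\<in>ivl P le x y - {y}. mobf k P le x z)) else 0)"

lemma ivl_sub_card:
  assumes "finite P" "porder P le" "x \<in> P" "y \<in> P" "z \<in> ivl P le x y" "z \<noteq> y"
  shows "card (ivl P le x z) < card (ivl P le x y)"
proof -
  have "ivl P le x z \<subseteq> ivl P le x y" using assms unfolding ivl_def using porderD(2)[OF assms(2), of _ z y] by auto
  moreover have "y \<notin> ivl P le x z" using assms unfolding ivl_def using porderD(3)[OF assms(2), of z y] by auto
  moreover have "y \<in> ivl P le x y" using assms unfolding ivl_def using porderD(1)[OF assms(2), of y] porderD(2)[OF assms(2), of x z y] by auto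
  moreover have "finite (ivl P le x y)" using assms unfolding ivl_def by auto
  ultimately have "ivl P le x z \<subset> ivl P le x y" "finite (ivl P le x y)" by blast+
  then show ?thesis by (rule psubset_card_mono[rotated])
qed

lemma ivl_card_pos:
  assumes "finite P" "porder P le" "x \<in> P" "y \<in> P" "le x y"
  shows "card (ivl P le x y) \<ge> 1" "card (ivl P le x y) \<le> card P"
proof -
  have "x \<in> ivl P le x y" using assms unfolding ivl_def using porderD(1)[OF assms(2), of x] by auto
  moreover have "finite (ivl P le x y)" using assms unfolding ivl_def by auto
  ultimately show "card (ivl P le x y) \<ge> 1"
    by (metis One_nat_def Suc_leI card_gt_0_iff empty_iff)
  show "card (ivl P le x y) \<le> card P" using assms unfolding ivl_def
    by (intro card_mono) auto
qed

lemma mobf_stable: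
  assumes "finite P" "porder P le"
  shows "x \<in> P \<Longrightarrow> y \<in> P \<Longrightarrow> le x y \<Longrightarrow> card (ivl P le x y) \<le> k1 \<Longrightarrow> card (ivl P le x y) \<le> k2
    \<Longrightarrow> mobf k1 P le x y = mobf k2 P le x y"
proof (induction k1 arbitrary: k2 y)
  case 0
  then show ?case using ivl_card_pos[OF assms, of x y] by simp
next
  case (Suc k1)
  from Suc.prems ivl_card_pos[OF assms, of x y] obtain k2' where k2: "k2 = Suc k2'"
    by (cases k2) auto
  have "mobf k1 P le x z = mobf k2' P le x z" if "z \<in> ivl P le x y - {y}" for z
  proof -
    have c: "card (ivl P le x z) < card (ivl P le x y)"
      using ivl_sub_card[OF assms, of x y z] that Suc.prems by auto
    show ?thesis
      using that c Suc.prems k2 by (intro Suc.IH) (auto simp: ivl_def)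
  qed
  then show ?case using k2 by simp
qed

lemma mob_exists:
  assumes "finite P" "porder P le"
  shows "(\<forall>x y. \<not> (x \<in> P \<and> y \<in> P \<and> le x y) \<longrightarrow> mobf (card P) P le x y = 0) \<and>
     (\<forall>x\<in>P. \<forall>y\<in>P. le x y \<longrightarrow>
        (\<Sum>z\<in>{z\<in>P. le x z \<and> le z y}. mobf (card P) P le x z) = (if x = y then 1 else 0))"
proof (intro conjI allI impI ballI)
  fix x y assume "\<not> (x \<in> P \<and> y \<in> P \<and> le x y)"
  then show "mobf (card P) P le x y = 0" by (cases "card P") auto
next
  fix x y assume xy: "x \<in> P" "y \<in> P" "le x y"
  have fin: "finite (ivl P le x y)" using assms unfolding ivl_def by auto
  have yin: "y \<in> ivl P le x y" using assms xy unfolding ivl_def using porderD(1)[OF assms(2), of y] by auto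
  obtain k where k: "card P = Suc k" using xy assms by (cases "card P") auto
  have "(\<Sum>z\<in>ivl P le x y. mobf (card P) P le x z)
      = mobf (card P) P le x y + (\<Sum>z\<in>ivl P le x y - {y}. mobf (card P) P le x z)"
    using fin yin by (simp add: sum.remove)
  also have "(\<Sum>z\<in>ivl P le x y - {y}. mobf (card P) P le x z) = (\<Sum>z\<in>ivl P le x y - {y}. mobf k P le x z)"
  proof (rule sum.cong[OF refl])
    fix z assume z: "z \<in> ivl P le x y - {y}"
    have c: "card (ivl P le x z) < card (ivl P le x y)"
      using ivl_sub_card[OF assms, of x y z] z xy by auto
    moreover have "card (ivl P le x y) \<le> card P" using ivl_card_pos[OF assms xy] by simp
    ultimately show "mobf (card P) P le x z = mobf k P le x z"
      using z xy k by (intro mobf_stable[OF assms]) (auto simp: ivl_def)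
  qed
  finally have eq: "(\<Sum>z\<in>ivl P le x y. mobf (card P) P le x z) =
       mobf (card P) P le x y + (\<Sum>z\<in>ivl P le x y - {y}. mobf k P le x z)" .
  show "(\<Sum>z\<in>{z\<in>P. le x z \<and> le z y}. mobf (card P) P le x z) = (if x = y then 1 else 0)"
  proof (cases "x = y")
    case True
    then have e0: "ivl P le x y - {y} = {}" using assms xy unfolding ivl_def using porderD(3)[OF assms(2), of _ y] by auto
    have "mobf (card P) P le x y = 1" using k xy True by simp
    moreover have "(\<Sum>z\<in>ivl P le x y - {y}. mobf k P le x z) = 0" by (simp only: e0 sum.empty)
    ultimately show ?thesis using eq True by (simp add: ivl_def[symmetric])
  next
    case False
    then show ?thesis using eq k xy by (simp add: ivl_def)
  qed
qed

lemma mob_unique: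
  assumes "finite P" "porder P le"
    and m1: "(\<forall>x y. \<not> (x \<in> P \<and> y \<in> P \<and> le x y) \<longrightarrow> m1 x y = 0) \<and>
     (\<forall>x\<in>P. \<forall>y\<in>P. le x y \<longrightarrow>
        (\<Sum>z\<in>{z\<in>P. le x z \<and> le z y}. m1 x z) = (if x = y then (1::int) else 0))"
    and m2: "(\<forall>x y. \<not> (x \<in> P \<and> y \<in> P \<and> le x y) \<longrightarrow> m2 x y = 0) \<and>
     (\<forall>x\<in>P. \<forall>y\<in>P. le x y \<longrightarrow>
        (\<Sum>z\<in>{z\<in>P. le x z \<and> le z y}. m2 x z) = (if x = y then (1::int) else 0))"
  shows "m1 = m2"
proof -
  have main: "\<And>y. card (ivl P le x y) = c \<Longrightarrow> x \<in> P \<Longrightarrow> y \<in> P \<Longrightarrow> le x y \<Longrightarrow> m1 x y = m2 x y" for x c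
  proof (induction c rule: less_induct)
    case (less c)
    fix y assume cy: "card (ivl P le x y) = c" and xy: "x \<in> P" "y \<in> P" "le x y"
    have fin: "finite (ivl P le x y)" using assms unfolding ivl_def by auto
    have yin: "y \<in> ivl P le x y" using assms xy unfolding ivl_def using porderD(1)[OF assms(2), of y] by auto
    have rest: "(\<Sum>z\<in>ivl P le x y - {y}. m1 x z) = (\<Sum>z\<in>ivl P le x y - {y}. m2 x z)"
    proof (rule sum.cong[OF refl])
      fix z assume z: "z \<in> ivl P le x y - {y}"
      have "card (ivl P le x z) < c" using ivl_sub_card[OF assms(1,2), of x y z] z xy cy by auto
      then show "m1 x z = m2 x z" using less.IH z xy by (auto simp: ivl_def)
    qed
    have e1: "(\<Sum>z\<in>ivl P le x y. m1 x z) = m1 x y + (\<Sum>z\<in>ivl P le x y - {y}. m1 x z)"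
      using fin yin by (simp add: sum.remove)
    have e2: "(\<Sum>z\<in>ivl P le x y. m2 x z) = m2 x y + (\<Sum>z\<in>ivl P le x y - {y}. m2 x z)"
      using fin yin by (simp add: sum.remove)
    have "(\<Sum>z\<in>ivl P le x y. m1 x z) = (if x = y then 1 else 0)"
      using conjunct2[OF m1, rule_format, OF xy] unfolding ivl_def .
    moreover have "(\<Sum>z\<in>ivl P le x y. m2 x z) = (if x = y then 1 else 0)"
      using conjunct2[OF m2, rule_format, OF xy] unfolding ivl_def .
    ultimately have "(\<Sum>z\<in>ivl P le x y. m1 x z) = (\<Sum>z\<in>ivl P le x y. m2 x z)" by simp
    then show "m1 x y = m2 x y" using e1 e2 rest by simp
  qed
  show ?thesis
  proof (intro ext)
    fix x y show "m1 x y = m2 x y"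
    proof (cases "x \<in> P \<and> y \<in> P \<and> le x y")
      case True
      then show ?thesis using main by blast
    next
      case False
      then show ?thesis using conjunct1[OF m1] conjunct1[OF m2] by simp
    qed
  qed
qed

definition mob_prop :: "'c set \<Rightarrow> ('c \<Rightarrow> 'c \<Rightarrow> bool) \<Rightarrow> ('c \<Rightarrow> 'c \<Rightarrow> int) \<Rightarrow> bool" where
  "mob_prop P le m \<longleftrightarrow> (\<forall>x y. \<not> (x \<in> P \<and> y \<in> P \<and> le x y) \<longrightarrow> m x y = 0) \<and>
     (\<forall>x\<in>P. \<forall>y\<in>P. le x y \<longrightarrow>
        (\<Sum>z\<in>{z\<in>P. le x z \<and> le z y}. m x z) = (if x = y then 1 else 0))"

lemma moebius_char:
  assumes "finite P" "porder P le"
  shows "mob_prop P le (moebius P le)"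
proof -
  have ex: "mob_prop P le (\<lambda>x y. mobf (card P) P le x y)"
    unfolding mob_prop_def by (rule mob_exists[OF assms])
  have un: "m = (\<lambda>x y. mobf (card P) P le x y)" if "mob_prop P le m" for m
    using mob_unique[OF assms, of m "\<lambda>x y. mobf (card P) P le x y"] that ex
    unfolding mob_prop_def by simp
  have "moebius P le = (THE m. mob_prop P le m)"
    unfolding moebius_def mob_prop_def by simp
  also have "\<dots> = (\<lambda>x y. mobf (card P) P le x y)"
    using ex un by (rule the_equality)
  finally show ?thesis using ex by simp
qed


lemma ivl_sub:
  assumes po: "porder P le" and w: "w \<in> ivl P le x y" and xP: "x \<in> P" "y \<in> P"
  shows "{z \<in> ivl P le x y. le w z} = ivl P le w y"
    and "{z \<in> ivl P le x y. le z w} = ivl P le x w"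
proof -
  from w have w': "w \<in> P" "le x w" "le w y" unfolding ivl_def by auto
  show "{z \<in> ivl P le x y. le w z} = ivl P le w y"
    unfolding ivl_def using w' porderD(2)[OF po xP(1) w'(1)] by auto
  show "{z \<in> ivl P le x y. le z w} = ivl P le x w"
    unfolding ivl_def using w' porderD(2)[OF po _ w'(1) xP(2)] by auto
qed

lemma moebius_dual:
  assumes fin: "finite P" and po: "porder P le" and xy: "x \<in> P" "y \<in> P" "le x y"
  shows "(\<Sum>z\<in>{z\<in>P. le x z \<and> le z y}. moebius P le z y) = (if x = y then 1 else 0)"
proof -
  define M where "M = moebius P le"
  have mp: "mob_prop P le M" unfolding M_def by (rule moebius_char[OF fin po])
  have M0: "\<And>a b. \<not> (a \<in> P \<and> b \<in> P \<and> le a b) \<Longrightarrow> M a b = 0"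
    using conjunct1[OF mp[unfolded mob_prop_def]] by simp
  have M1: "\<And>a b. a \<in> P \<Longrightarrow> b \<in> P \<Longrightarrow> le a b \<Longrightarrow> (\<Sum>z\<in>ivl P le a b. M a z) = (if a = b then 1 else 0)"
    using conjunct2[OF mp[unfolded mob_prop_def]] unfolding ivl_def by simp
  have finI: "\<And>a b. finite (ivl P le a b)" using fin unfolding ivl_def by auto
  have Mdiag: "\<And>a. a \<in> P \<Longrightarrow> M a a = 1"
  proof -
    fix a assume a: "a \<in> P"
    have "ivl P le a a = {a}" unfolding ivl_def using porderD(1)[OF po a] porderD(3)[OF po _ a] a by auto
    then show "M a a = 1" using M1[OF a a porderD(1)[OF po a]] by simp
  qed
  define E where "E w = (\<Sum>z\<in>ivl P le w y. M z y) - (if w = y then 1 else 0)" for w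
  have step1: "(\<Sum>w\<in>ivl P le a y. M a w * E w) = 0" if a: "a \<in> P" "le a y" for a
  proof -
    have "(\<Sum>w\<in>ivl P le a y. M a w * (\<Sum>z\<in>ivl P le w y. M z y))
        = (\<Sum>w\<in>ivl P le a y. \<Sum>z\<in>{z\<in>ivl P le a y. le w z}. M a w * M z y)"
      by (rule sum.cong[OF refl]) (simp add: ivl_sub[OF po _ a(1) xy(2)] sum_distrib_left)
    also have "\<dots> = (\<Sum>z\<in>ivl P le a y. \<Sum>w\<in>{w\<in>ivl P le a y. le w z}. M a w * M z y)"
      by (rule sum.swap_restrict[OF finI finI])
    also have "\<dots> = (\<Sum>z\<in>ivl P le a y. M z y * (\<Sum>w\<in>ivl P le a z. M a w))"
      by (rule sum.cong[OF refl]) (simp add: ivl_sub[OF po _ a(1) xy(2)] sum_distrib_left mult.commute)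
    also have "\<dots> = (\<Sum>z\<in>ivl P le a y. if z = a then M z y else 0)"
    proof (rule sum.cong[OF refl])
      fix z assume z: "z \<in> ivl P le a y"
      then have "z \<in> P" "le a z" unfolding ivl_def by auto
      then show "M z y * (\<Sum>w\<in>ivl P le a z. M a w) = (if z = a then M z y else 0)"
        using M1[OF a(1), of z] by auto
    qed
    also have "\<dots> = M a y"
    proof -
      have "a \<in> ivl P le a y" unfolding ivl_def using a porderD(1)[OF po a(1)] by simp
      then show ?thesis using finI by (simp add: sum.delta')
    qed
    finally have A: "(\<Sum>w\<in>ivl P le a y. M a w * (\<Sum>z\<in>ivl P le w y. M z y)) = M a y" .
    have B: "(\<Sum>w\<in>ivl P le a y. M a w * (if w = y then 1 else 0)) = M a y"
    proof -
      have "y \<in> ivl P le a y" unfolding ivl_def using a xy porderD(1)[OF po] by simp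
      then show ?thesis using finI by (simp add: sum.delta' if_distrib cong: if_cong)
    qed
    show ?thesis unfolding E_def using A B
      by (simp add: right_diff_distrib sum_subtractf)
  qed
  have E0: "\<And>a. card (ivl P le a y) = c \<Longrightarrow> a \<in> P \<Longrightarrow> le a y \<Longrightarrow> E a = 0" for c
  proof (induction c rule: less_induct)
    case (less c)
    fix a assume ca: "card (ivl P le a y) = c" and a: "a \<in> P" "le a y"
    have ain: "a \<in> ivl P le a y" unfolding ivl_def using a porderD(1)[OF po a(1)] by simp
    have rest: "(\<Sum>w\<in>ivl P le a y - {a}. M a w * E w) = 0"
    proof (rule sum.neutral, rule ballI)
      fix w assume w: "w \<in> ivl P le a y - {a}"
      then have wP: "w \<in> P" "le w y" "le a w" unfolding ivl_def by auto
      have "ivl P le w y \<subseteq> ivl P le a y" using w unfolding ivl_def using porderD(2)[OF po, of a w] a by auto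
      moreover have "a \<notin> ivl P le w y" using w unfolding ivl_def using porderD(3)[OF po, of a w] a by auto
      ultimately have "ivl P le w y \<subset> ivl P le a y" using ain by blast
      then have "card (ivl P le w y) < c" using ca psubset_card_mono[OF finI] by blast
      then show "M a w * E w = 0" using less.IH wP by simp
    qed
    have "0 = (\<Sum>w\<in>ivl P le a y. M a w * E w)" using step1[OF a] by simp
    also have "\<dots> = M a a * E a + (\<Sum>w\<in>ivl P le a y - {a}. M a w * E w)"
      using finI ain by (simp add: sum.remove)
    finally show "E a = 0" using rest Mdiag[OF a(1)] by simp
  qed
  have "E x = 0" using E0 xy by blast
  then show ?thesis unfolding E_def M_def ivl_def by simp
qed

definition NCP :: "nat set \<Rightarrow> nat set set set" where
  "NCP Q = {\<tau>. partition_on Q \<tau> \<and> \<not> has_crossing \<tau>}"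

lemma NCP_finite: "finite Q \<Longrightarrow> finite (NCP Q)"
proof -
  assume "finite Q"
  moreover have "NCP Q \<subseteq> Pow (Pow Q)" unfolding NCP_def partition_on_def by auto
  ultimately show ?thesis by (meson finite_Pow_iff finite_subset)
qed

lemma NCP_empty: "NCP {} = {{}}"
  unfolding NCP_def has_crossing_def by (auto simp: partition_on_empty)

lemma NCP_single: "Q \<noteq> {} \<Longrightarrow> {Q} \<in> NCP Q"
  unfolding NCP_def has_crossing_def by (auto simp: partition_on_space)

lemma NCP_block: "\<tau> \<in> NCP Q \<Longrightarrow> B \<in> \<tau> \<Longrightarrow> B \<subseteq> Q \<and> B \<noteq> {}"
  unfolding NCP_def partition_on_def by auto

lemma NCP_block_proper:
  assumes "\<tau> \<in> NCP Q" "\<tau> \<noteq> {Q}" "B \<in> \<tau>"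
  shows "B \<subset> Q"
proof -
  have p: "partition_on Q \<tau>" using assms unfolding NCP_def by simp
  have "B \<subseteq> Q" using NCP_block assms by blast
  moreover have "B \<noteq> Q"
  proof
    assume BQ: "B = Q"
    have "\<tau> = {Q}"
    proof
      show "{Q} \<subseteq> \<tau>" using BQ assms by simp
      show "\<tau> \<subseteq> {Q}"
      proof
        fix C assume C: "C \<in> \<tau>"
        show "C \<in> {Q}"
        proof (rule ccontr)
          assume "C \<notin> {Q}"
          then have "C \<noteq> B" using BQ by simp
          then have "C \<inter> B = {}" using p C assms(3) unfolding partition_on_def disjoint_def by blast
          moreover have "C \<subseteq> Q" "C \<noteq> {}" using NCP_block[OF assms(1) C] by auto
          ultimately show False using BQ by blast
        qed
      qed
    qed
    then show False using assms by simp
  qed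
  ultimately show ?thesis by blast
qed

function kap :: "('a \<Rightarrow> complex) \<Rightarrow> (nat \<Rightarrow> 'a::ring_1) \<Rightarrow> nat set \<Rightarrow> complex" where
  "kap phi X P = (if finite P then phi (prod_list (map X (sorted_list_of_set P)))
       - (\<Sum>\<tau>\<in>NCP P - {{P}}. \<Prod>B\<in>\<tau>. kap phi X B) else 0)"
  by auto
termination
proof (relation "measure (\<lambda>(phi, X, P). card P)")
  show "wf (measure (\<lambda>(phi, X, P). card P))" by simp
next
  fix phi :: "'a \<Rightarrow> complex" and X :: "nat \<Rightarrow> 'a" and P \<tau> B
  assume "finite P" "\<tau> \<in> NCP P - {{P}}" "B \<in> \<tau>"
  then have "B \<subset> P" using NCP_block_proper by blast
  then have "card B < card P" using \<open>finite P\<close> by (simp add: psubset_card_mono)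
  then show "((phi, X, B), phi, X, P) \<in> measure (\<lambda>(phi, X, P). card P)" by simp
qed

declare kap.simps[simp del]

lemma moment_cumulant:
  assumes "finite P" "phi 1 = 1"
  shows "phi (prod_list (map X (sorted_list_of_set P))) = (\<Sum>\<tau>\<in>NCP P. \<Prod>B\<in>\<tau>. kap phi X B)"
proof (cases "P = {}")
  case True
  then show ?thesis using assms by (simp add: NCP_empty)
next
  case False
  have fin: "finite (NCP P)" using NCP_finite assms by blast
  have "(\<Sum>\<tau>\<in>NCP P. \<Prod>B\<in>\<tau>. kap phi X B) = (\<Prod>B\<in>{P}. kap phi X B) + (\<Sum>\<tau>\<in>NCP P - {{P}}. \<Prod>B\<in>\<tau>. kap phi X B)"
    using fin NCP_single[OF False] by (simp add: sum.remove)
  also have "\<dots> = phi (prod_list (map X (sorted_list_of_set P)))"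
    using kap.simps[of phi X P] assms by simp
  finally show ?thesis by simp
qed

definition isol :: "nat set \<Rightarrow> nat set set \<Rightarrow> bool" where
  "isol R \<tau> \<longleftrightarrow> (\<forall>B\<in>\<tau>. B \<subseteq> R \<or> B \<inter> R = {})"

definition kerle :: "(nat \<Rightarrow> nat) \<Rightarrow> nat set set \<Rightarrow> bool" where
  "kerle i \<tau> \<longleftrightarrow> (\<forall>B\<in>\<tau>. \<forall>x\<in>B. \<forall>y\<in>B. i x = i y)"

definition consec :: "nat set \<Rightarrow> nat set \<Rightarrow> bool" where
  "consec Q R \<longleftrightarrow> (\<forall>x\<in>R. \<forall>y\<in>R. \<forall>q\<in>Q. x \<le> q \<and> q \<le> y \<longrightarrow> q \<in> R)"

lemma has_crossing_mono: "has_crossing \<tau> \<Longrightarrow> \<tau> \<subseteq> \<tau>' \<Longrightarrow> has_crossing \<tau>'"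
  unfolding has_crossing_def by blast

lemma NCP_union:
  assumes t1: "\<tau>1 \<in> NCP R" and t2: "\<tau>2 \<in> NCP (Q - R)" and RQ: "R \<subseteq> Q" and c: "consec Q R"
  shows "\<tau>1 \<union> \<tau>2 \<in> NCP Q"
proof -
  have p1: "partition_on R \<tau>1" and n1: "\<not> has_crossing \<tau>1" using t1 unfolding NCP_def by auto
  have p2: "partition_on (Q - R) \<tau>2" and n2: "\<not> has_crossing \<tau>2" using t2 unfolding NCP_def by auto
  have b1: "\<And>B. B \<in> \<tau>1 \<Longrightarrow> B \<subseteq> R \<and> B \<noteq> {}" using NCP_block[OF t1] by blast
  have b2: "\<And>B. B \<in> \<tau>2 \<Longrightarrow> B \<subseteq> Q - R \<and> B \<noteq> {}" using NCP_block[OF t2] by blast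
  have "partition_on Q (\<tau>1 \<union> \<tau>2)"
  proof (rule partition_onI)
    show "\<Union>(\<tau>1 \<union> \<tau>2) = Q" using partition_onD1[OF p1] partition_onD1[OF p2] RQ by auto
  next
    fix B C assume B: "B \<in> \<tau>1 \<union> \<tau>2" and C: "C \<in> \<tau>1 \<union> \<tau>2" and ne: "B \<noteq> C"
    show "disjnt B C"
    proof -
      { assume "B \<in> \<tau>1" "C \<in> \<tau>1" then have ?thesis
          using partition_onD2[OF p1] ne unfolding pairwise_def by auto }
      moreover
      { assume "B \<in> \<tau>2" "C \<in> \<tau>2" then have ?thesis
          using partition_onD2[OF p2] ne unfolding pairwise_def by auto }
      moreover
      { assume "B \<in> \<tau>1" "C \<in> \<tau>2" then have ?thesis
          using b1 b2 unfolding disjnt_def by blast }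
      moreover
      { assume "B \<in> \<tau>2" "C \<in> \<tau>1" then have ?thesis
          using b1 b2 unfolding disjnt_def by blast }
      ultimately show ?thesis using B C by blast
    qed
  next
    show "{} \<notin> \<tau>1 \<union> \<tau>2" using b1 b2 by blast
  qed
  moreover have "\<not> has_crossing (\<tau>1 \<union> \<tau>2)"
  proof
    assume "has_crossing (\<tau>1 \<union> \<tau>2)"
    then obtain i j k l B C where ijkl: "i < j" "j < k" "k < l" and BC: "B \<in> \<tau>1 \<union> \<tau>2" "C \<in> \<tau>1 \<union> \<tau>2"
      "B \<noteq> C" "i \<in> B" "k \<in> B" "j \<in> C" "l \<in> C"
      unfolding has_crossing_def by blast
    { assume "B \<in> \<tau>1" "C \<in> \<tau>1"
      then have "has_crossing \<tau>1" unfolding has_crossing_def using ijkl BC by blast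
      then have False using n1 by simp }
    moreover
    { assume "B \<in> \<tau>2" "C \<in> \<tau>2"
      then have "has_crossing \<tau>2" unfolding has_crossing_def using ijkl BC by blast
      then have False using n2 by simp }
    moreover
    { assume "B \<in> \<tau>1" "C \<in> \<tau>2"
      then have "i \<in> R" "k \<in> R" "j \<in> Q" "j \<notin> R" using b1 b2 BC by blast+
      then have False using c ijkl unfolding consec_def by (meson less_imp_le) }
    moreover
    { assume "B \<in> \<tau>2" "C \<in> \<tau>1"
      then have "j \<in> R" "l \<in> R" "k \<in> Q" "k \<notin> R" using b1 b2 BC by blast+
      then have False using c ijkl unfolding consec_def by (meson less_imp_le) }
    ultimately show False using BC by blast
  qed
  ultimately show ?thesis unfolding NCP_def by simp
qed

lemma NCP_restrict_in:
  assumes t: "\<tau> \<in> NCP Q" and iso: "isol R \<tau>" and RQ: "R \<subseteq> Q"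
  shows "{B\<in>\<tau>. B \<subseteq> R} \<in> NCP R" "{B\<in>\<tau>. B \<inter> R = {}} \<in> NCP (Q - R)"
proof -
  have p: "partition_on Q \<tau>" and n: "\<not> has_crossing \<tau>" using t unfolding NCP_def by auto
  have cov: "\<And>q. q \<in> Q \<Longrightarrow> \<exists>B\<in>\<tau>. q \<in> B" using partition_onD1[OF p] by blast
  have bl: "\<And>B. B \<in> \<tau> \<Longrightarrow> B \<subseteq> Q \<and> B \<noteq> {}" using NCP_block[OF t] by blast
  have "partition_on R {B\<in>\<tau>. B \<subseteq> R}"
  proof (rule partition_onI)
    show "\<Union>{B\<in>\<tau>. B \<subseteq> R} = R"
    proof
      show "\<Union>{B\<in>\<tau>. B \<subseteq> R} \<subseteq> R" by blast
      show "R \<subseteq> \<Union>{B\<in>\<tau>. B \<subseteq> R}"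
      proof
        fix r assume r: "r \<in> R"
        then obtain B where "B \<in> \<tau>" "r \<in> B" using cov RQ by blast
        then show "r \<in> \<Union>{B\<in>\<tau>. B \<subseteq> R}" using iso r unfolding isol_def by blast
      qed
    qed
  next
    fix B C assume "B \<in> {B\<in>\<tau>. B \<subseteq> R}" "C \<in> {B\<in>\<tau>. B \<subseteq> R}" "B \<noteq> C"
    then show "disjnt B C" using partition_onD2[OF p] unfolding pairwise_def by auto
  next
    show "{} \<notin> {B\<in>\<tau>. B \<subseteq> R}" using bl by blast
  qed
  moreover have "\<not> has_crossing {B\<in>\<tau>. B \<subseteq> R}" using n has_crossing_mono by blast
  ultimately show "{B\<in>\<tau>. B \<subseteq> R} \<in> NCP R" unfolding NCP_def by simp
  have "partition_on (Q - R) {B\<in>\<tau>. B \<inter> R = {}}"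
  proof (rule partition_onI)
    show "\<Union>{B\<in>\<tau>. B \<inter> R = {}} = Q - R"
    proof
      show "\<Union>{B\<in>\<tau>. B \<inter> R = {}} \<subseteq> Q - R" using bl by blast
      show "Q - R \<subseteq> \<Union>{B\<in>\<tau>. B \<inter> R = {}}"
      proof
        fix r assume r: "r \<in> Q - R"
        then obtain B where "B \<in> \<tau>" "r \<in> B" using cov by blast
        then show "r \<in> \<Union>{B\<in>\<tau>. B \<inter> R = {}}" using iso r unfolding isol_def by blast
      qed
    qed
  next
    fix B C assume "B \<in> {B\<in>\<tau>. B \<inter> R = {}}" "C \<in> {B\<in>\<tau>. B \<inter> R = {}}" "B \<noteq> C"
    then show "disjnt B C" using partition_onD2[OF p] unfolding pairwise_def by auto
  next
    show "{} \<notin> {B\<in>\<tau>. B \<inter> R = {}}" using bl by blast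
  qed
  moreover have "\<not> has_crossing {B\<in>\<tau>. B \<inter> R = {}}" using n has_crossing_mono by blast
  ultimately show "{B\<in>\<tau>. B \<inter> R = {}} \<in> NCP (Q - R)" unfolding NCP_def by simp
qed

lemma split_sum:
  fixes w :: "nat set \<Rightarrow> complex" and Pr :: "nat set set \<Rightarrow> bool"
  assumes fin: "finite Q" and RQ: "R \<subseteq> Q" and c: "consec Q R"
    and Ri: "\<forall>x\<in>R. \<forall>y\<in>R. i x = i y"
  shows "(\<Sum>\<tau>\<in>{\<tau>\<in>NCP Q. kerle i \<tau> \<and> isol R \<tau> \<and> Pr {B\<in>\<tau>. B \<inter> R = {}}}. \<Prod>B\<in>\<tau>. w B)
    = (\<Sum>\<tau>\<in>NCP R. \<Prod>B\<in>\<tau>. w B) * (\<Sum>\<tau>\<in>{\<tau>\<in>NCP (Q - R). kerle i \<tau> \<and> Pr \<tau>}. \<Prod>B\<in>\<tau>. w B)"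
proof -
  define S where "S = {\<tau>\<in>NCP Q. kerle i \<tau> \<and> isol R \<tau> \<and> Pr {B\<in>\<tau>. B \<inter> R = {}}}"
  define S2 where "S2 = {\<tau>\<in>NCP (Q - R). kerle i \<tau> \<and> Pr \<tau>}"
  define h where "h = (\<lambda>(t1::nat set set, t2::nat set set). t1 \<union> t2)"
  have finR: "finite R" using fin RQ finite_subset by blast
  have fin1: "finite (NCP R)" using NCP_finite[OF finR] .
  have fin2: "finite S2" unfolding S2_def using NCP_finite[of "Q - R"] fin by auto
  have inj: "inj_on h (NCP R \<times> S2)"
  proof (rule inj_onI)
    fix a b assume a: "a \<in> NCP R \<times> S2" and b: "b \<in> NCP R \<times> S2" and e: "h a = h b"
    obtain a1 a2 where aa: "a = (a1, a2)" by (cases a)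
    obtain b1 b2 where bb: "b = (b1, b2)" by (cases b)
    have A1: "\<And>B. B \<in> a1 \<Longrightarrow> B \<subseteq> R \<and> B \<noteq> {}" using a aa NCP_block by blast
    have B1: "\<And>B. B \<in> b1 \<Longrightarrow> B \<subseteq> R \<and> B \<noteq> {}" using b bb NCP_block by blast
    have A2: "\<And>B. B \<in> a2 \<Longrightarrow> B \<subseteq> Q - R \<and> B \<noteq> {}" using a aa NCP_block unfolding S2_def by blast
    have B2: "\<And>B. B \<in> b2 \<Longrightarrow> B \<subseteq> Q - R \<and> B \<noteq> {}" using b bb NCP_block unfolding S2_def by blast
    have u: "a1 \<union> a2 = b1 \<union> b2" using e aa bb h_def by simp
    have "a1 = {B \<in> a1 \<union> a2. B \<subseteq> R}" using A1 A2 by blast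
    also have "\<dots> = {B \<in> b1 \<union> b2. B \<subseteq> R}" using u by simp
    also have "\<dots> = b1" using B1 B2 by blast
    finally have 1: "a1 = b1" .
    have "a2 = {B \<in> a1 \<union> a2. B \<inter> R = {}}" using A1 A2 by blast
    also have "\<dots> = {B \<in> b1 \<union> b2. B \<inter> R = {}}" using u by simp
    also have "\<dots> = b2" using B1 B2 by blast
    finally have 2: "a2 = b2" .
    show "a = b" using 1 2 aa bb by simp
  qed
  have img: "h ` (NCP R \<times> S2) = S"
  proof
    show "h ` (NCP R \<times> S2) \<subseteq> S"
    proof
      fix t assume "t \<in> h ` (NCP R \<times> S2)"
      then obtain t1 t2 where t: "t = t1 \<union> t2" and t1: "t1 \<in> NCP R" and t2: "t2 \<in> S2"
        unfolding h_def by auto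
      have t2N: "t2 \<in> NCP (Q - R)" using t2 unfolding S2_def by simp
      have A1: "\<And>B. B \<in> t1 \<Longrightarrow> B \<subseteq> R \<and> B \<noteq> {}" using NCP_block[OF t1] by blast
      have A2: "\<And>B. B \<in> t2 \<Longrightarrow> B \<subseteq> Q - R \<and> B \<noteq> {}" using NCP_block[OF t2N] by blast
      have tNQ: "t \<in> NCP Q" using NCP_union[OF t1 t2N RQ c] t by simp
      have kt: "kerle i t"
      proof -
        have k2: "kerle i t2" using t2 unfolding S2_def by simp
        show ?thesis unfolding kerle_def
        proof (intro ballI)
          fix B x y assume B: "B \<in> t" and x: "x \<in> B" and y: "y \<in> B"
          show "i x = i y"
          proof (cases "B \<in> t1")
            case True
            then have "x \<in> R" "y \<in> R" using A1 x y by auto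
            then show ?thesis using Ri by blast
          next
            case False
            then have "B \<in> t2" using B t by simp
            then show ?thesis using k2 x y unfolding kerle_def by blast
          qed
        qed
      qed
      have it: "isol R t" unfolding isol_def
      proof
        fix B assume "B \<in> t"
        then have "B \<in> t1 \<or> B \<in> t2" using t by simp
        then show "B \<subseteq> R \<or> B \<inter> R = {}"
        proof
          assume "B \<in> t1" then show ?thesis using A1 by simp
        next
          assume "B \<in> t2" then have "B \<subseteq> Q - R" using A2 by simp
          then show ?thesis by auto
        qed
      qed
      have eq: "{B\<in>t. B \<inter> R = {}} = t2"
      proof
        show "{B\<in>t. B \<inter> R = {}} \<subseteq> t2"
        proof
          fix B assume B: "B \<in> {B\<in>t. B \<inter> R = {}}"
          show "B \<in> t2"
          proof (rule ccontr)
            assume "B \<notin> t2"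
            then have "B \<in> t1" using B t by simp
            then have "B \<subseteq> R" "B \<noteq> {}" using A1 by auto
            then show False using B by auto
          qed
        qed
        show "t2 \<subseteq> {B\<in>t. B \<inter> R = {}}"
        proof
          fix B assume B: "B \<in> t2"
          then have "B \<subseteq> Q - R" using A2 by simp
          then show "B \<in> {B\<in>t. B \<inter> R = {}}" using B t by auto
        qed
      qed
      have pr2: "Pr t2" using t2 unfolding S2_def by simp
      show "t \<in> S" unfolding S_def mem_Collect_eq eq using tNQ kt it pr2 by blast
    qed
    show "S \<subseteq> h ` (NCP R \<times> S2)"
    proof
      fix t assume t: "t \<in> S"
      have tN: "t \<in> NCP Q" and iso: "isol R t" using t unfolding S_def by auto
      have bl: "\<And>B. B \<in> t \<Longrightarrow> B \<subseteq> Q \<and> B \<noteq> {}" using tN NCP_block by blast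
      have "t = {B\<in>t. B \<subseteq> R} \<union> {B\<in>t. B \<inter> R = {}}" using iso unfolding isol_def by blast
      moreover have "{B\<in>t. B \<subseteq> R} \<in> NCP R" using NCP_restrict_in[OF tN iso RQ] by simp
      moreover have "{B\<in>t. B \<inter> R = {}} \<in> S2"
      proof -
        have k: "kerle i t" and pr: "Pr {B\<in>t. B \<inter> R = {}}" using t unfolding S_def by auto
        have "kerle i {B\<in>t. B \<inter> R = {}}" using k unfolding kerle_def by blast
        then show ?thesis using NCP_restrict_in(2)[OF tN iso RQ] pr unfolding S2_def by blast
      qed
      ultimately have "t = h ({B\<in>t. B \<subseteq> R}, {B\<in>t. B \<inter> R = {}})"
        "({B\<in>t. B \<subseteq> R}, {B\<in>t. B \<inter> R = {}}) \<in> NCP R \<times> S2" unfolding h_def by simp_all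
      then show "t \<in> h ` (NCP R \<times> S2)" by (rule image_eqI)
    qed
  qed
  have "(\<Sum>\<tau>\<in>S. \<Prod>B\<in>\<tau>. w B) = (\<Sum>p\<in>NCP R \<times> S2. \<Prod>B\<in>h p. w B)"
    using sum.reindex[OF inj, of "\<lambda>\<tau>. \<Prod>B\<in>\<tau>. w B"] img by simp
  also have "\<dots> = (\<Sum>p\<in>NCP R \<times> S2. (\<Prod>B\<in>fst p. w B) * (\<Prod>B\<in>snd p. w B))"
  proof (rule sum.cong[OF refl])
    fix p assume p: "p \<in> NCP R \<times> S2"
    obtain t1 t2 where pp: "p = (t1, t2)" by (cases p)
    have t1: "t1 \<in> NCP R" and t2: "t2 \<in> NCP (Q - R)" using p pp unfolding S2_def by auto
    have A1: "\<And>B. B \<in> t1 \<Longrightarrow> B \<subseteq> R \<and> B \<noteq> {}" using t1 NCP_block by blast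
    have A2: "\<And>B. B \<in> t2 \<Longrightarrow> B \<subseteq> Q - R \<and> B \<noteq> {}" using t2 NCP_block by blast
    have "finite t1" "finite t2" using t1 t2 finR fin unfolding NCP_def
      by (auto intro: finite_elements)
    moreover have "t1 \<inter> t2 = {}" using A1 A2 by blast
    ultimately show "(\<Prod>B\<in>h p. w B) = (\<Prod>B\<in>fst p. w B) * (\<Prod>B\<in>snd p. w B)"
      using pp h_def by (simp add: prod.union_disjoint)
  qed
  also have "\<dots> = (\<Sum>t1\<in>NCP R. \<Sum>t2\<in>S2. (\<Prod>B\<in>t1. w B) * (\<Prod>B\<in>t2. w B))"
    by (simp add: sum.cartesian_product split_beta)
  also have "\<dots> = (\<Sum>\<tau>\<in>NCP R. \<Prod>B\<in>\<tau>. w B) * (\<Sum>\<tau>\<in>S2. \<Prod>B\<in>\<tau>. w B)"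
    by (simp add: sum_product)
  finally show ?thesis unfolding S_def S2_def .
qed

definition runs_ok :: "(nat \<Rightarrow> nat) \<Rightarrow> (nat \<Rightarrow> nat set) \<Rightarrow> nat \<Rightarrow> (nat \<Rightarrow> nat) \<Rightarrow> bool" where
  "runs_ok i Rs m k \<longleftrightarrow> (\<forall>t<m. Rs t \<noteq> {} \<and> finite (Rs t)) \<and> (\<forall>t<m. \<forall>x\<in>Rs t. i x = k t) \<and>
     (\<forall>t t'. t < t' \<and> t' < m \<longrightarrow> (\<forall>x\<in>Rs t. \<forall>y\<in>Rs t'. x < y)) \<and>
     (\<forall>t. Suc t < m \<longrightarrow> k t \<noteq> k (Suc t))"

definition QW :: "(nat \<Rightarrow> nat set) \<Rightarrow> nat set \<Rightarrow> nat set" where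
  "QW Rs W = (\<Union>t\<in>W. Rs t)"

definition GG :: "(nat \<Rightarrow> nat) \<Rightarrow> (nat set \<Rightarrow> complex) \<Rightarrow> (nat \<Rightarrow> nat set) \<Rightarrow> nat set \<Rightarrow> nat set \<Rightarrow> complex" where
  "GG i w Rs W T = (\<Sum>\<tau>\<in>{\<tau>\<in>NCP (QW Rs W). kerle i \<tau> \<and> (\<forall>s\<in>T. \<not> isol (Rs s) \<tau>)}. \<Prod>B\<in>\<tau>. w B)"

lemma runs_okD:
  assumes "runs_ok i Rs m k"
  shows "t < m \<Longrightarrow> Rs t \<noteq> {}" "t < m \<Longrightarrow> finite (Rs t)" "t < m \<Longrightarrow> x \<in> Rs t \<Longrightarrow> i x = k t"
    "t < t' \<Longrightarrow> t' < m \<Longrightarrow> x \<in> Rs t \<Longrightarrow> y \<in> Rs t' \<Longrightarrow> x < y"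
    "Suc t < m \<Longrightarrow> k t \<noteq> k (Suc t)"
  using assms unfolding runs_ok_def by blast+

lemma runs_disj:
  assumes "runs_ok i Rs m k" "t < m" "s < m" "t \<noteq> s"
  shows "Rs t \<inter> Rs s = {}"
proof -
  { fix x assume "x \<in> Rs t" "x \<in> Rs s"
    then have False
    proof (cases "t < s")
      case True
      then show False using runs_okD(4)[OF assms(1) True assms(3) \<open>x \<in> Rs t\<close> \<open>x \<in> Rs s\<close>] by simp
    next
      case False
      then have "s < t" using assms by simp
      then show False using runs_okD(4)[OF assms(1) \<open>s < t\<close> assms(2) \<open>x \<in> Rs s\<close> \<open>x \<in> Rs t\<close>] by simp
    qed }
  then show ?thesis by blast
qed

lemma QW_finite:
  assumes "runs_ok i Rs m k" "W \<subseteq> {..<m}"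
  shows "finite (QW Rs W)"
proof -
  have "finite W" using assms(2) finite_subset by blast
  moreover have "\<And>t. t \<in> W \<Longrightarrow> finite (Rs t)" using runs_okD(2)[OF assms(1)] assms(2) by blast
  ultimately show ?thesis unfolding QW_def by blast
qed

lemma QW_diff:
  assumes "runs_ok i Rs m k" "W \<subseteq> {..<m}" "t \<in> W"
  shows "QW Rs W - Rs t = QW Rs (W - {t})"
proof
  show "QW Rs W - Rs t \<subseteq> QW Rs (W - {t})" unfolding QW_def by blast
  show "QW Rs (W - {t}) \<subseteq> QW Rs W - Rs t"
  proof
    fix x assume "x \<in> QW Rs (W - {t})"
    then obtain s where s: "s \<in> W" "s \<noteq> t" "x \<in> Rs s" unfolding QW_def by blast
    then have "x \<notin> Rs t" using runs_disj[OF assms(1), of t s] assms by blast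
    then show "x \<in> QW Rs W - Rs t" using s unfolding QW_def by blast
  qed
qed

lemma consec_run:
  assumes r: "runs_ok i Rs m k" and W: "W \<subseteq> {..<m}" and t: "t \<in> W"
  shows "consec (QW Rs W) (Rs t)"
  unfolding consec_def
proof (intro ballI impI)
  fix x y q assume x: "x \<in> Rs t" and y: "y \<in> Rs t" and q: "q \<in> QW Rs W" and xqy: "x \<le> q \<and> q \<le> y"
  obtain s where s: "s \<in> W" "q \<in> Rs s" using q unfolding QW_def by blast
  have tm: "t < m" "s < m" using W t s by auto
  show "q \<in> Rs t"
  proof (cases "s = t")
    case True then show ?thesis using s by simp
  next
    case False
    show ?thesis
    proof (cases "s < t")
      case True
      have "q < x" using runs_okD(4)[OF r True tm(1) s(2) x] .
      then show ?thesis using xqy by simp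
    next
      case False2: False
      then have "t < s" using False by simp
      then have "y < q" using runs_okD(4)[OF r _ tm(2) y s(2)] by simp
      then show ?thesis using xqy by simp
    qed
  qed
qed

lemma GG_rec:
  assumes r: "runs_ok i Rs m k" and W: "W \<subseteq> {..<m}" and t: "t \<in> W" "t \<notin> T" and TW: "T \<subseteq> W"
  shows "GG i w Rs W T = GG i w Rs W (insert t T) + (\<Sum>\<tau>\<in>NCP (Rs t). \<Prod>B\<in>\<tau>. w B) * GG i w Rs (W - {t}) T"
proof -
  define Q where "Q = QW Rs W"
  define R where "R = Rs t"
  define Pr where "Pr = (\<lambda>\<tau>. \<forall>s\<in>T. \<not> isol (Rs s) \<tau>)"
  have tm: "t < m" using W t by auto
  have fin: "finite Q" unfolding Q_def using QW_finite[OF r W] .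
  have RQ: "R \<subseteq> Q" unfolding R_def Q_def QW_def using t by blast
  have c: "consec Q R" unfolding R_def Q_def by (rule consec_run[OF r W t(1)])
  have Ri: "\<forall>x\<in>R. \<forall>y\<in>R. i x = i y" unfolding R_def using runs_okD(3)[OF r tm] by simp
  define A where "A = {\<tau>\<in>NCP Q. kerle i \<tau> \<and> Pr \<tau>}"
  define A1 where "A1 = {\<tau>\<in>NCP Q. kerle i \<tau> \<and> (\<forall>s\<in>insert t T. \<not> isol (Rs s) \<tau>)}"
  define A2 where "A2 = {\<tau>\<in>NCP Q. kerle i \<tau> \<and> isol R \<tau> \<and> Pr {B\<in>\<tau>. B \<inter> R = {}}}"
  have key: "Pr \<tau> \<longleftrightarrow> Pr {B\<in>\<tau>. B \<inter> R = {}}" if tau: "\<tau> \<in> NCP Q" "isol R \<tau>" for \<tau>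
  proof -
    have "isol (Rs s) \<tau> \<longleftrightarrow> isol (Rs s) {B\<in>\<tau>. B \<inter> R = {}}" if s: "s \<in> T" for s
    proof -
      have sm: "s < m" "s \<noteq> t" using s TW W t by auto
      have dj: "Rs s \<inter> R = {}" unfolding R_def using runs_disj[OF r sm(1) tm sm(2)] .
      show ?thesis
      proof
        assume "isol (Rs s) \<tau>" then show "isol (Rs s) {B\<in>\<tau>. B \<inter> R = {}}" unfolding isol_def by blast
      next
        assume a: "isol (Rs s) {B\<in>\<tau>. B \<inter> R = {}}"
        show "isol (Rs s) \<tau>" unfolding isol_def
        proof
          fix B assume B: "B \<in> \<tau>"
          show "B \<subseteq> Rs s \<or> B \<inter> Rs s = {}"
          proof (cases "B \<inter> R = {}")
            case True then show ?thesis using a B unfolding isol_def by blast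
          next
            case False
            then have "B \<subseteq> R" using tau(2) B unfolding isol_def by blast
            then show ?thesis using dj by blast
          qed
        qed
      qed
    qed
    then show ?thesis unfolding Pr_def by blast
  qed
  have AU: "A = A1 \<union> A2"
  proof
    show "A \<subseteq> A1 \<union> A2"
    proof
      fix \<tau> assume a: "\<tau> \<in> A"
      show "\<tau> \<in> A1 \<union> A2"
      proof (cases "isol R \<tau>")
        case True
        then have "\<tau> \<in> A2" using a key unfolding A_def A2_def by blast
        then show ?thesis by simp
      next
        case False
        then have "\<tau> \<in> A1" using a unfolding A_def A1_def Pr_def R_def by blast
        then show ?thesis by simp
      qed
    qed
    show "A1 \<union> A2 \<subseteq> A"
    proof
      fix \<tau> assume "\<tau> \<in> A1 \<union> A2"
      then show "\<tau> \<in> A"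
      proof
        assume "\<tau> \<in> A1" then show ?thesis unfolding A1_def A_def Pr_def by blast
      next
        assume a2: "\<tau> \<in> A2"
        then have "\<tau> \<in> NCP Q" "isol R \<tau>" unfolding A2_def by auto
        then show ?thesis using a2 key unfolding A2_def A_def by blast
      qed
    qed
  qed
  have dis: "A1 \<inter> A2 = {}" unfolding A1_def A2_def R_def by blast
  have finN: "finite (NCP Q)" using NCP_finite[OF fin] .
  have fA1: "finite A1" unfolding A1_def using finN by simp
  have fA2: "finite A2" unfolding A2_def using finN by simp
  have "GG i w Rs W T = (\<Sum>\<tau>\<in>A. \<Prod>B\<in>\<tau>. w B)" unfolding GG_def A_def Q_def Pr_def by simp
  also have "\<dots> = (\<Sum>\<tau>\<in>A1. \<Prod>B\<in>\<tau>. w B) + (\<Sum>\<tau>\<in>A2. \<Prod>B\<in>\<tau>. w B)"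
    unfolding AU using fA1 fA2 dis by (simp add: sum.union_disjoint)
  also have "(\<Sum>\<tau>\<in>A2. \<Prod>B\<in>\<tau>. w B) = (\<Sum>\<tau>\<in>NCP R. \<Prod>B\<in>\<tau>. w B) * (\<Sum>\<tau>\<in>{\<tau>\<in>NCP (Q - R). kerle i \<tau> \<and> Pr \<tau>}. \<Prod>B\<in>\<tau>. w B)"
    unfolding A2_def by (rule split_sum[OF fin RQ c Ri])
  also have "Q - R = QW Rs (W - {t})" unfolding Q_def R_def using QW_diff[OF r W t(1)] .
  finally show ?thesis unfolding GG_def A1_def Q_def R_def Pr_def by simp
qed


lemma GG_pow:
  assumes r: "runs_ok i Rs m k" and fT: "finite T"
  shows "T \<subseteq> W \<Longrightarrow> W \<subseteq> {..<m} \<Longrightarrow> GG i w Rs W T =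
    (\<Sum>U\<in>Pow T. (\<Prod>t\<in>U. - (\<Sum>\<tau>\<in>NCP (Rs t). \<Prod>B\<in>\<tau>. w B)) * GG i w Rs (W - U) {})"
  using fT
proof (induction T arbitrary: W rule: finite_induct)
  case empty
  then show ?case by simp
next
  case (insert t T)
  define c where "c t = (\<Sum>\<tau>\<in>NCP (Rs t). \<Prod>B\<in>\<tau>. w B)" for t
  define f where "f W' U = (\<Prod>t\<in>U. - c t) * GG i w Rs (W' - U) {}" for W' U
  have tW: "t \<in> W" "T \<subseteq> W" using insert.prems by auto
  have rec: "GG i w Rs W T = GG i w Rs W (insert t T) + c t * GG i w Rs (W - {t}) T"
    unfolding c_def by (rule GG_rec[OF r insert.prems(2) tW(1) insert.hyps(2) tW(2)])
  have ih1: "GG i w Rs W T = (\<Sum>U\<in>Pow T. f W U)"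
    unfolding f_def c_def using insert.IH[OF tW(2) insert.prems(2)] .
  have ih2: "GG i w Rs (W - {t}) T = (\<Sum>U\<in>Pow T. f (W - {t}) U)"
    unfolding f_def c_def using insert.IH[of "W - {t}"] insert.prems insert.hyps(2) by auto
  have finP: "finite (Pow T)" using insert.hyps(1) by simp
  have inj: "inj_on (insert t) (Pow T)"
  proof (rule inj_onI)
    fix x y assume x: "x \<in> Pow T" and y: "y \<in> Pow T" and e: "insert t x = insert t y"
    have "x = insert t x - {t}" using x insert.hyps(2) by auto
    also have "\<dots> = insert t y - {t}" using e by simp
    also have "\<dots> = y" using y insert.hyps(2) by auto
    finally show "x = y" .
  qed
  have dis: "Pow T \<inter> insert t ` Pow T = {}" using insert.hyps(2) by blast
  have "(\<Sum>U\<in>Pow (insert t T). f W U) = (\<Sum>U\<in>Pow T. f W U) + (\<Sum>U\<in>insert t ` Pow T. f W U)"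
    unfolding Pow_insert using finP dis by (simp add: sum.union_disjoint)
  also have "(\<Sum>U\<in>insert t ` Pow T. f W U) = (\<Sum>U\<in>Pow T. f W (insert t U))"
    using sum.reindex[OF inj] by simp
  also have "\<dots> = (\<Sum>U\<in>Pow T. - c t * f (W - {t}) U)"
  proof (rule sum.cong[OF refl])
    fix U assume U: "U \<in> Pow T"
    then have "t \<notin> U" "finite U" using insert.hyps finite_subset by auto
    moreover have "W - insert t U = W - {t} - U" by blast
    ultimately show "f W (insert t U) = - c t * f (W - {t}) U" unfolding f_def by simp
  qed
  also have "\<dots> = - c t * GG i w Rs (W - {t}) T" using ih2 by (simp add: sum_distrib_left)
  finally have "(\<Sum>U\<in>Pow (insert t T). f W U) = GG i w Rs W T - c t * GG i w Rs (W - {t}) T"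
    using ih1 by simp
  then show ?case using rec unfolding f_def c_def by simp
qed

lemma NCP_blocks_finite: "\<tau> \<in> NCP Q \<Longrightarrow> finite Q \<Longrightarrow> B \<in> \<tau> \<Longrightarrow> finite B"
  by (rule finite_subset[of B Q]) (use NCP_block in blast)+

lemma NCP_finite_tau: "\<tau> \<in> NCP Q \<Longrightarrow> finite Q \<Longrightarrow> finite \<tau>"
  unfolding NCP_def by (elim CollectE conjE) (rule finite_elements)

lemma NCP_disj: "\<tau> \<in> NCP Q \<Longrightarrow> B \<in> \<tau> \<Longrightarrow> C \<in> \<tau> \<Longrightarrow> B \<noteq> C \<Longrightarrow> B \<inter> C = {}"
  unfolding NCP_def partition_on_def pairwise_def disjnt_def by blast

lemma NCP_cover: "\<tau> \<in> NCP Q \<Longrightarrow> q \<in> Q \<Longrightarrow> \<exists>C\<in>\<tau>. q \<in> C"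
  unfolding NCP_def partition_on_def by blast

lemma interval_block:
  assumes t: "\<tau> \<in> NCP Q" and fin: "finite Q" and ne: "Q \<noteq> {}"
  shows "\<exists>B\<in>\<tau>. consec Q B"
proof -
  define sp where "sp B = Max B - Min B" for B :: "nat set"
  have ft: "finite \<tau>" using NCP_finite_tau[OF t fin] .
  have tne: "\<tau> \<noteq> {}" using ne NCP_cover[OF t] by blast
  have "Min (sp ` \<tau>) \<in> sp ` \<tau>" using ft tne by (intro Min_in) auto
  then obtain B where B: "B \<in> \<tau>" "sp B = Min (sp ` \<tau>)" by (metis imageE)
  have Bmin: "\<And>C. C \<in> \<tau> \<Longrightarrow> sp B \<le> sp C" using B ft by simp
  have fB: "finite B" "B \<noteq> {}" using NCP_blocks_finite[OF t fin B(1)] NCP_block[OF t B(1)] by auto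
  have "consec Q B" unfolding consec_def
  proof (intro ballI impI)
    fix x y q assume x: "x \<in> B" and y: "y \<in> B" and q: "q \<in> Q" and xqy: "x \<le> q \<and> q \<le> y"
    show "q \<in> B"
    proof (rule ccontr)
      assume qB: "q \<notin> B"
      then have xq: "x < q" "q < y" using xqy x y by (auto simp: le_less)
      obtain C where C: "C \<in> \<tau>" "q \<in> C" using NCP_cover[OF t q] by blast
      have CB: "C \<noteq> B" using C qB by blast
      have dBC: "B \<inter> C = {}" using NCP_disj[OF t B(1) C(1)] CB by blast
      define L where "L = {b\<in>B. b < q}"
      define U where "U = {b\<in>B. q < b}"
      have fL: "finite L" "L \<noteq> {}" unfolding L_def using fB x xq by auto
      have fU: "finite U" "U \<noteq> {}" unfolding U_def using fB y xq by auto
      define b1 where "b1 = Max L"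
      define b2 where "b2 = Min U"
      have b1: "b1 \<in> B" "b1 < q" using Max_in[OF fL] unfolding b1_def L_def by auto
      have b2: "b2 \<in> B" "q < b2" using Min_in[OF fU] unfolding b2_def U_def by auto
      have cin: "b1 < c \<and> c < b2" if c: "c \<in> C" for c
      proof -
        have "c \<noteq> b1" "c \<noteq> b2" using c b1 b2 dBC by auto
        moreover have "\<not> c < b1"
        proof
          assume "c < b1"
          then have "c < b1 \<and> b1 < q \<and> q < b2 \<and> (\<exists>B'\<in>\<tau>. \<exists>C'\<in>\<tau>. B' \<noteq> C' \<and> c \<in> B' \<and> q \<in> B' \<and> b1 \<in> C' \<and> b2 \<in> C')"
            using b1 b2 C c CB B(1) by blast
          then have "has_crossing \<tau>" unfolding has_crossing_def by blast
          then show False using t unfolding NCP_def by simp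
        qed
        moreover have "\<not> b2 < c"
        proof
          assume "b2 < c"
          then have "b1 < q \<and> q < b2 \<and> b2 < c \<and> (\<exists>B'\<in>\<tau>. \<exists>C'\<in>\<tau>. B' \<noteq> C' \<and> b1 \<in> B' \<and> b2 \<in> B' \<and> q \<in> C' \<and> c \<in> C')"
            using b1 b2 C c CB B(1) by blast
          then have "has_crossing \<tau>" unfolding has_crossing_def by blast
          then show False using t unfolding NCP_def by simp
        qed
        ultimately show ?thesis by simp
      qed
      have fC: "finite C" "C \<noteq> {}" using NCP_blocks_finite[OF t fin C(1)] C by auto
      have "Max C < b2" using cin Max_in[OF fC] by blast
      moreover have "b1 < Min C" using cin Min_in[OF fC] by blast
      moreover have "b2 \<le> Max B" using b2 fB by simp
      moreover have "Min B \<le> b1" using b1 fB by simp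
      moreover have "Min C \<le> Max C" using fC by simp
      ultimately have "sp C < sp B" unfolding sp_def by linarith
      then show False using Bmin[OF C(1)] by simp
    qed
  qed
  then show ?thesis using B by blast
qed

lemma partition_remove_block:
  assumes t: "\<tau> \<in> NCP Q" and B: "B \<in> \<tau>"
  shows "\<tau> - {B} \<in> NCP (Q - B)"
proof -
  have p: "partition_on Q \<tau>" and n: "\<not> has_crossing \<tau>" using t unfolding NCP_def by auto
  have "partition_on (Q - B) (\<tau> - {B})"
  proof (rule partition_onI)
    show "\<Union>(\<tau> - {B}) = Q - B"
    proof
      show "\<Union>(\<tau> - {B}) \<subseteq> Q - B"
      proof
        fix x assume "x \<in> \<Union>(\<tau> - {B})"
        then obtain C where C: "C \<in> \<tau>" "C \<noteq> B" "x \<in> C" by blast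
        then show "x \<in> Q - B" using NCP_disj[OF t C(1) B] NCP_block[OF t C(1)] by blast
      qed
      show "Q - B \<subseteq> \<Union>(\<tau> - {B})" using partition_onD1[OF p] by blast
    qed
  next
    fix p q assume "p \<in> \<tau> - {B}" "q \<in> \<tau> - {B}" "p \<noteq> q"
    then show "disjnt p q" using NCP_disj[OF t] unfolding disjnt_def by blast
  next
    show "{} \<notin> \<tau> - {B}" using partition_onD3[OF p] by blast
  qed
  moreover have "\<not> has_crossing (\<tau> - {B})" using n has_crossing_mono[of "\<tau> - {B}" \<tau>] by blast
  ultimately show ?thesis unfolding NCP_def by simp
qed

lemma isolation_aux:
  "\<forall>Rs \<tau>. card (QW Rs {..<m}) = n \<longrightarrow> runs_ok i Rs m k \<longrightarrow> 0 < m \<longrightarrow>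
     \<tau> \<in> NCP (QW Rs {..<m}) \<longrightarrow> kerle i \<tau> \<longrightarrow> (\<exists>t<m. isol (Rs t) \<tau>)"
proof (induction n rule: less_induct)
  case (less n)
  show ?case
  proof (intro allI impI)
    fix Rs \<tau>
    assume cn: "card (QW Rs {..<m}) = n" and r: "runs_ok i Rs m k" and m0: "0 < m"
      and t: "\<tau> \<in> NCP (QW Rs {..<m})" and ke: "kerle i \<tau>"
    define Q where "Q = QW Rs {..<m}"
    have fin: "finite Q" unfolding Q_def using QW_finite[OF r] by simp
    have ne: "Q \<noteq> {}" unfolding Q_def QW_def using runs_okD(1)[OF r m0] m0 by blast
    obtain B where B: "B \<in> \<tau>" "consec Q B" using interval_block[OF t[folded Q_def] fin ne] by blast
    have BQ: "B \<subseteq> Q" "B \<noteq> {}" using NCP_block[OF t B(1)] unfolding Q_def by auto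
    have fB: "finite B" using BQ fin finite_subset by blast
    define b0 where "b0 = Min B"
    have b0: "b0 \<in> B" "\<And>b. b \<in> B \<Longrightarrow> b0 \<le> b" unfolding b0_def using fB BQ by auto
    obtain t0 where t0: "t0 < m" "b0 \<in> Rs t0" using b0 BQ unfolding Q_def QW_def by blast
    have BR: "B \<subseteq> Rs t0"
    proof
      fix b assume b: "b \<in> B"
      obtain t' where t': "t' < m" "b \<in> Rs t'" using b BQ unfolding Q_def QW_def by blast
      show "b \<in> Rs t0"
      proof (cases "t' = t0")
        case True then show ?thesis using t' by simp
      next
        case False
        show ?thesis
        proof (cases "t' < t0")
          case True
          have "b < b0" using runs_okD(4)[OF r True t0(1) t'(2) t0(2)] .
          then show ?thesis using b0(2)[OF b] by simp
        next
          case False2: False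
          then have tt: "t0 < t'" using False by simp
          then have sm: "Suc t0 < m \<or> Suc t0 = t'" using t' by auto
          have sm': "Suc t0 < m" using tt t' by simp
          obtain y where y: "y \<in> Rs (Suc t0)" and yB: "y \<in> B"
          proof (cases "Suc t0 = t'")
            case True
            then show ?thesis using that[of b] t' b by simp
          next
            case False
            obtain y where y: "y \<in> Rs (Suc t0)" using runs_okD(1)[OF r sm'] by blast
            have "Suc t0 < t'" using False tt by simp
            then have "y < b" using runs_okD(4)[OF r _ t'(1) y t'(2)] by simp
            moreover have "b0 < y" using runs_okD(4)[OF r _ sm' t0(2) y] by simp
            moreover have "y \<in> Q" using y sm' unfolding Q_def QW_def by blast
            ultimately have "y \<in> B" using B(2) b0(1) b unfolding consec_def by (meson less_imp_le)
            then show ?thesis using that y by blast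
          qed
          have "i y = i b0" using ke B(1) yB b0(1) unfolding kerle_def by blast
          moreover have "i y = k (Suc t0)" using runs_okD(3)[OF r sm' y] .
          moreover have "i b0 = k t0" using runs_okD(3)[OF r t0] .
          ultimately show ?thesis using runs_okD(5)[OF r sm'] by simp
        qed
      qed
    qed
    show "\<exists>t<m. isol (Rs t) \<tau>"
    proof (cases "B = Rs t0")
      case True
      have "isol (Rs t0) \<tau>" unfolding isol_def
      proof
        fix C assume C: "C \<in> \<tau>"
        show "C \<subseteq> Rs t0 \<or> C \<inter> Rs t0 = {}"
        proof (cases "C = B")
          case True then show ?thesis using \<open>B = Rs t0\<close> by simp
        next
          case False then show ?thesis using NCP_disj[OF t C B(1)] \<open>B = Rs t0\<close> by simp
        qed
      qed
      then show ?thesis using t0 by blast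
    next
      case False
      define Rs' where "Rs' = Rs(t0 := Rs t0 - B)"
      define \<tau>' where "\<tau>' = \<tau> - {B}"
      have QW': "QW Rs' {..<m} = Q - B"
      proof
        show "QW Rs' {..<m} \<subseteq> Q - B"
        proof
          fix x assume "x \<in> QW Rs' {..<m}"
          then obtain s where s: "s < m" "x \<in> Rs' s" unfolding QW_def by blast
          show "x \<in> Q - B"
          proof (cases "s = t0")
            case True then show ?thesis using s unfolding Rs'_def Q_def QW_def by auto
          next
            case False
            then have "Rs s \<inter> Rs t0 = {}" using runs_disj[OF r s(1) t0(1)] by simp
            then show ?thesis using s BR False unfolding Rs'_def Q_def QW_def by auto
          qed
        qed
        show "Q - B \<subseteq> QW Rs' {..<m}"
        proof
          fix x assume "x \<in> Q - B"
          then obtain s where s: "s < m" "x \<in> Rs s" "x \<notin> B" unfolding Q_def QW_def by blast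
          then have "x \<in> Rs' s" unfolding Rs'_def by auto
          then show "x \<in> QW Rs' {..<m}" using s unfolding QW_def by blast
        qed
      qed
      have Rs'sub: "\<And>t x. x \<in> Rs' t \<Longrightarrow> x \<in> Rs t" unfolding Rs'_def by (auto split: if_splits)
      have r': "runs_ok i Rs' m k"
        unfolding runs_ok_def
      proof (intro conjI)
        show "\<forall>t<m. Rs' t \<noteq> {} \<and> finite (Rs' t)"
        proof (intro allI impI conjI)
          fix t assume tm: "t < m"
          show "Rs' t \<noteq> {}"
            using runs_okD(1)[OF r tm] False BR unfolding Rs'_def by auto
          show "finite (Rs' t)" using runs_okD(2)[OF r tm] unfolding Rs'_def by auto
        qed
        show "\<forall>t<m. \<forall>x\<in>Rs' t. i x = k t"
          using runs_okD(3)[OF r] Rs'sub by blast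
        show "\<forall>t t'. t < t' \<and> t' < m \<longrightarrow> (\<forall>x\<in>Rs' t. \<forall>y\<in>Rs' t'. x < y)"
          using runs_okD(4)[OF r] Rs'sub by blast
        show "\<forall>t. Suc t < m \<longrightarrow> k t \<noteq> k (Suc t)" using runs_okD(5)[OF r] by blast
      qed
      have t': "\<tau>' \<in> NCP (QW Rs' {..<m})" unfolding \<tau>'_def QW'
        using partition_remove_block[OF t[folded Q_def] B(1)] .
      have ke': "kerle i \<tau>'" using ke unfolding kerle_def \<tau>'_def by blast
      have "Q - B \<subset> Q" using BQ by blast
      then have "card (Q - B) < card Q" by (rule psubset_card_mono[OF fin])
      then have cl: "card (QW Rs' {..<m}) < n" using cn QW' unfolding Q_def by simp
      obtain s where s: "s < m" "isol (Rs' s) \<tau>'" using less.IH[OF cl] r' m0 t' ke' by blast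
      have "isol (Rs s) \<tau>" unfolding isol_def
      proof
        fix C assume C: "C \<in> \<tau>"
        show "C \<subseteq> Rs s \<or> C \<inter> Rs s = {}"
        proof (cases "C = B")
          case True
          show ?thesis
          proof (cases "s = t0")
            case True2: True
            then show ?thesis using BR \<open>C = B\<close> by simp
          next
            case False2: False
            then show ?thesis using runs_disj[OF r s(1) t0(1)] BR \<open>C = B\<close> by blast
          qed
        next
          case CB: False
          then have C': "C \<in> \<tau>'" using C unfolding \<tau>'_def by simp
          have "C \<subseteq> Rs' s \<or> C \<inter> Rs' s = {}" using s(2) C' unfolding isol_def by blast
          moreover have "C \<inter> B = {}" using NCP_disj[OF t C B(1) CB] .
          ultimately show ?thesis unfolding Rs'_def by (cases "s = t0") auto
        qed
      qed
      then show ?thesis using s by blast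
    qed
  qed
qed

fun grp :: "(nat \<Rightarrow> nat) \<Rightarrow> nat list \<Rightarrow> nat list list" where
  "grp i [] = []"
| "grp i (x # xs) = (case grp i xs of [] \<Rightarrow> [[x]]
      | g # gs \<Rightarrow> (if i x = i (hd g) then (x # g) # gs else [x] # g # gs))"

lemma grp_concat: "concat (grp i xs) = xs"
  by (induction xs) (auto split: list.splits)

lemma grp_nonempty: "g \<in> set (grp i xs) \<Longrightarrow> g \<noteq> []"
proof (induction xs arbitrary: g)
  case Nil then show ?case by simp
next
  case (Cons x xs)
  then show ?case by (auto split: list.splits if_splits)
qed

lemma grp_const: "g \<in> set (grp i xs) \<Longrightarrow> y \<in> set g \<Longrightarrow> i y = i (hd g)"
proof (induction xs arbitrary: g)
  case Nil then show ?case by simp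
next
  case (Cons x xs)
  show ?case
  proof (cases "grp i xs")
    case Nil
    then show ?thesis using Cons.prems by simp
  next
    case (Cons h hs)
    have hne: "h \<noteq> []" using grp_nonempty[of h i xs] Cons by simp
    show ?thesis
    proof (cases "i x = i (hd h)")
      case True
      then have gg: "g = x # h \<or> g \<in> set hs" using Cons.prems(1) Cons by auto
      then show ?thesis
      proof
        assume g: "g = x # h"
        then have "y = x \<or> y \<in> set h" using Cons.prems(2) by simp
        then show ?thesis
        proof
          assume "y \<in> set h"
          then have "i y = i (hd h)" using Cons.IH[of h] \<open>grp i xs = h # hs\<close> by simp
          then show ?thesis using g True by simp
        qed (use g in simp)
      next
        assume "g \<in> set hs"
        then show ?thesis using Cons.IH[of g] \<open>grp i xs = h # hs\<close> Cons.prems(2) by simp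
      qed
    next
      case False
      then have gg: "g = [x] \<or> g \<in> set (h # hs)" using Cons.prems(1) Cons by auto
      then show ?thesis
      proof
        assume "g = [x]" then show ?thesis using Cons.prems(2) by simp
      next
        assume "g \<in> set (h # hs)"
        then show ?thesis using Cons.IH[of g] \<open>grp i xs = h # hs\<close> Cons.prems(2) by simp
      qed
    qed
  qed
qed

lemma grp_hd:
  "grp i xs = h # hs \<Longrightarrow> xs \<noteq> [] \<and> hd h = hd xs"
proof (induction xs arbitrary: h hs)
  case Nil then show ?case by simp
next
  case (Cons x xs)
  then show ?case by (auto split: list.splits if_splits)
qed

lemma grp_alt:
  "Suc t < length (grp i xs) \<Longrightarrow> i (hd (grp i xs ! t)) \<noteq> i (hd (grp i xs ! Suc t))"
proof (induction xs arbitrary: t)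
  case Nil then show ?case by simp
next
  case (Cons x xs)
  show ?case
  proof (cases "grp i xs")
    case Nil
    then show ?thesis using Cons.prems by simp
  next
    case (Cons h hs)
    note gx = this
    show ?thesis
    proof (cases "i x = i (hd h)")
      case True
      then have G: "grp i (x # xs) = (x # h) # hs" using gx by simp
      show ?thesis
      proof (cases t)
        case 0
        then obtain h2 hs2 where hs: "hs = h2 # hs2" using Cons.prems G by (cases hs) auto
        have "i (hd h) \<noteq> i (hd h2)" using Cons.IH[of 0] gx hs by simp
        then show ?thesis using G 0 hs True by simp
      next
        case (Suc t')
        then show ?thesis using Cons.IH[of "Suc t'"] Cons.prems G gx by simp
      qed
    next
      case False
      then have G: "grp i (x # xs) = [x] # h # hs" using gx by simp
      show ?thesis
      proof (cases t)
        case 0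
        then show ?thesis using G False by simp
      next
        case (Suc t')
        then show ?thesis using Cons.IH[of t'] Cons.prems G gx by simp
      qed
    qed
  qed
qed

lemma sorted_concat_nth:
  assumes "sorted_wrt (<) (concat Gs)" "t < t'" "t' < length Gs" "x \<in> set (Gs ! t)" "y \<in> set (Gs ! t')"
  shows "x < y"
  using assms
proof (induction Gs arbitrary: t t')
  case Nil
  then show ?case by simp
next
  case (Cons g Gs)
  have s: "sorted_wrt (<) (concat Gs)" "\<forall>a\<in>set g. \<forall>b\<in>set (concat Gs). a < b"
    using Cons.prems(1) by (auto simp: sorted_wrt_append)
  obtain t'' where t'': "t' = Suc t''" using Cons.prems(2) by (cases t') auto
  show ?case
  proof (cases t)
    case 0
    have "y \<in> set (concat Gs)" using Cons.prems t'' by auto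
    then show ?thesis using s(2) Cons.prems 0 by auto
  next
    case (Suc s0)
    then show ?thesis using Cons.IH[OF s(1), of s0 t''] Cons.prems t'' by auto
  qed
qed

lemma sorted_concat_group:
  assumes "sorted_wrt (<) (concat Gs)" "g \<in> set Gs"
  shows "sorted_wrt (<) g"
  using assms by (induction Gs) (auto simp: sorted_wrt_append)

lemma concat_map_if: "concat (map (\<lambda>t. if P t then f t else []) xs) = concat (map f (filter P xs))"
  by (induction xs) auto

lemma sorted_list_subset_filter:
  assumes "sorted_wrt (<) js" "A \<subseteq> set js"
  shows "sorted_list_of_set A = filter (\<lambda>j. j \<in> A) js"
proof -
  have fA: "finite A" using assms(2) finite_subset by blast
  have "sorted_wrt (<) (filter (\<lambda>j. j \<in> A) js)" using assms(1) by (simp add: sorted_wrt_filter)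
  then have "sorted (filter (\<lambda>j. j \<in> A) js)" "distinct (filter (\<lambda>j. j \<in> A) js)"
    by (auto simp: strict_sorted_iff)
  moreover have "set (filter (\<lambda>j. j \<in> A) js) = A" using assms(2) by auto
  ultimately show ?thesis using fA
    by (intro sorted_distinct_set_unique) auto
qed

lemma cplxD:
  assumes "cplx_algebra sm"
  shows "sm c (x + y) = sm c x + sm c y" "sm (c + d) x = sm c x + sm d x"
    "sm (c * d) x = sm c (sm d x)" "sm 1 x = x" "sm c (x * y) = sm c x * y" "sm c (x * y) = x * sm c y"
  using assms unfolding cplx_algebra_def by blast+

lemma sm_zero_right: "cplx_algebra sm \<Longrightarrow> sm c 0 = 0"
  using cplxD(1)[of sm c 0 0] by simp

lemma sm_zero_left: "cplx_algebra sm \<Longrightarrow> sm 0 x = 0"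
  using cplxD(2)[of sm 0 0 x] by simp

lemma sm_neg: "cplx_algebra sm \<Longrightarrow> sm (- c) x = - sm c x"
proof -
  assume a: "cplx_algebra sm"
  have "sm c x + sm (- c) x = 0" using cplxD(2)[OF a, of c "- c" x] sm_zero_left[OF a, of x] by simp
  then show ?thesis by (simp add: add_eq_0_iff)
qed

lemma sm_sum:
  assumes "cplx_algebra sm" "finite S"
  shows "sm c (\<Sum>U\<in>S. g U) = (\<Sum>U\<in>S. sm c (g U))"
  using assms(2) by (induction S rule: finite_induct) (simp_all add: sm_zero_right[OF assms(1)] cplxD(1)[OF assms(1)])

lemma sm_one_right: "cplx_algebra sm \<Longrightarrow> x * sm c 1 = sm c x"
  using cplxD(6)[of sm c x 1] by simp

lemma ulfD:
  assumes "unital_lin_functional sm f"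
  shows "f (x + y) = f x + f y" "f (sm c x) = c * f x" "f 1 = 1"
  using assms unfolding unital_lin_functional_def by blast+

lemma ulf_zero: "unital_lin_functional sm f \<Longrightarrow> f 0 = 0"
  using ulfD(1)[of sm f 0 0] by simp

lemma ulf_diff: "unital_lin_functional sm f \<Longrightarrow> f (x - y) = f x - f y"
  using ulfD(1)[of sm f "x - y" y] by (simp add: eq_diff_eq)

lemma ulf_sum:
  assumes "unital_lin_functional sm f" "finite S"
  shows "f (\<Sum>U\<in>S. g U) = (\<Sum>U\<in>S. f (g U))"
  using assms(2) by (induction S rule: finite_induct) (simp_all add: ulf_zero[OF assms(1)] ulfD(1)[OF assms(1)])

lemma homD:
  assumes "unital_alg_hom smA smB h"
  shows "h (x + y) = h x + h y" "h (x * y) = h x * h y" "h (smA c x) = smB c (h x)" "h 1 = 1"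
  using assms unfolding unital_alg_hom_def by blast+

lemma hom_diff: "unital_alg_hom smA smB h \<Longrightarrow> h (x - y) = h x - h y"
  using homD(1)[of smA smB h "x - y" y] by (simp add: eq_diff_eq)

lemma hom_prod_list: "unital_alg_hom smA smB h \<Longrightarrow> h (prod_list l) = prod_list (map h l)"
  by (induction l) (simp_all add: homD(2) homD(4))

lemma expand_prod:
  assumes cA: "cplx_algebra sm"
  shows "prod_list (map (\<lambda>t. f t - sm (c t) 1) [0..<m]) =
    (\<Sum>U\<in>Pow {..<m}. sm (\<Prod>t\<in>U. - c t) (prod_list (map f (filter (\<lambda>t. t \<notin> U) [0..<m]))))"
proof (induction m)
  case 0
  then show ?case using cplxD(4)[OF cA] by simp
next
  case (Suc m)
  define p where "p U = prod_list (map f (filter (\<lambda>t. t \<notin> U) [0..<m]))" for U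
  define L where "L = prod_list (map (\<lambda>t. f t - sm (c t) 1) [0..<m])"
  have IH: "L = (\<Sum>U\<in>Pow {..<m}. sm (\<Prod>t\<in>U. - c t) (p U))" using Suc.IH unfolding L_def p_def .
  have lhs: "prod_list (map (\<lambda>t. f t - sm (c t) 1) [0..<Suc m]) = L * f m - sm (c m) L"
    unfolding L_def by (simp add: right_diff_distrib sm_one_right[OF cA])
  have finP: "finite (Pow {..<m})" by simp
  have inj: "inj_on (insert m) (Pow {..<m})"
  proof (rule inj_onI)
    fix x y assume x: "x \<in> Pow {..<m}" and y: "y \<in> Pow {..<m}" and e: "insert m x = insert m y"
    have "x = insert m x - {m}" using x by auto
    also have "\<dots> = insert m y - {m}" using e by simp
    also have "\<dots> = y" using y by auto
    finally show "x = y" .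
  qed
  have dis: "Pow {..<m} \<inter> insert m ` Pow {..<m} = {}" by auto
  define F where "F U = sm (\<Prod>t\<in>U. - c t) (prod_list (map f (filter (\<lambda>t. t \<notin> U) [0..<Suc m])))" for U
  have "(\<Sum>U\<in>Pow {..<Suc m}. F U) = (\<Sum>U\<in>Pow {..<m}. F U) + (\<Sum>U\<in>insert m ` Pow {..<m}. F U)"
    unfolding lessThan_Suc Pow_insert using finP dis by (simp add: sum.union_disjoint)
  also have "(\<Sum>U\<in>Pow {..<m}. F U) = (\<Sum>U\<in>Pow {..<m}. sm (\<Prod>t\<in>U. - c t) (p U) * f m)"
  proof (rule sum.cong[OF refl])
    fix U assume U: "U \<in> Pow {..<m}"
    then have "m \<notin> U" by auto
    then have "filter (\<lambda>t. t \<notin> U) [0..<Suc m] = filter (\<lambda>t. t \<notin> U) [0..<m] @ [m]" by simp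
    then show "F U = sm (\<Prod>t\<in>U. - c t) (p U) * f m"
      unfolding F_def p_def by (simp add: cplxD(5)[OF cA])
  qed
  also have "\<dots> = L * f m" unfolding IH by (simp add: sum_distrib_right)
  also have "(\<Sum>U\<in>insert m ` Pow {..<m}. F U) = (\<Sum>U\<in>Pow {..<m}. F (insert m U))"
    using sum.reindex[OF inj] by simp
  also have "\<dots> = (\<Sum>U\<in>Pow {..<m}. - sm (c m) (sm (\<Prod>t\<in>U. - c t) (p U)))"
  proof (rule sum.cong[OF refl])
    fix U assume U: "U \<in> Pow {..<m}"
    then have mU: "m \<notin> U" "finite U" using finite_subset by auto
    have "filter (\<lambda>t. t \<notin> insert m U) [0..<Suc m] = filter (\<lambda>t. t \<notin> U) [0..<m]"
      by (simp, rule filter_cong) auto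
    moreover have "(\<Prod>t\<in>insert m U. - c t) = - c m * (\<Prod>t\<in>U. - c t)" using mU by simp
    ultimately show "F (insert m U) = - sm (c m) (sm (\<Prod>t\<in>U. - c t) (p U))"
      unfolding F_def p_def by (simp add: cplxD(3)[OF cA] sm_neg[OF cA])
  qed
  also have "\<dots> = - sm (c m) L" unfolding IH by (simp add: sm_sum[OF cA] sum_negf)
  finally show ?case using lhs unfolding F_def by simp
qed

lemma map2_map_map: "map2 F (map f xs) (map g xs) = map (\<lambda>x. F (f x) (g x)) xs"
  by (induction xs) auto

lemma prod_list_concat_map:
  "prod_list (map F (concat (map G ts))) = prod_list (map (\<lambda>t. prod_list (map F (G t))) ts)"
  by (induction ts) auto

lemma runs_of_grp:
  assumes s: "sorted_wrt (<) (concat Gs)" and ne: "\<forall>g\<in>set Gs. g \<noteq> []"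
    and c: "\<forall>g\<in>set Gs. \<forall>y\<in>set g. i y = i (hd g)"
    and a: "\<forall>t. Suc t < length Gs \<longrightarrow> i (hd (Gs ! t)) \<noteq> i (hd (Gs ! Suc t))"
  shows "runs_ok i (\<lambda>t. set (Gs ! t)) (length Gs) (\<lambda>t. i (hd (Gs ! t)))"
  unfolding runs_ok_def
proof (intro conjI)
  show "\<forall>t<length Gs. set (Gs ! t) \<noteq> {} \<and> finite (set (Gs ! t))" using ne by simp
  show "\<forall>t<length Gs. \<forall>x\<in>set (Gs ! t). i x = i (hd (Gs ! t))" using c by simp
  show "\<forall>t t'. t < t' \<and> t' < length Gs \<longrightarrow> (\<forall>x\<in>set (Gs ! t). \<forall>y\<in>set (Gs ! t'). x < y)"
    using sorted_concat_nth[OF s] by blast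
  show "\<forall>t. Suc t < length Gs \<longrightarrow> i (hd (Gs ! t)) \<noteq> i (hd (Gs ! Suc t))" using a .
qed

lemma QW_all: "QW (\<lambda>t. set (Gs ! t)) {..<length Gs} = set (concat Gs)"
proof -
  have "set Gs = (\<lambda>t. Gs ! t) ` {..<length Gs}"
    using map_nth[of Gs] by (metis set_map set_upt atLeast0LessThan)
  then show ?thesis unfolding QW_def set_concat by (simp add: image_image)
qed

lemma QW_mono: "W \<subseteq> V \<Longrightarrow> QW Rs W \<subseteq> QW Rs V"
  unfolding QW_def by blast

lemma sorted_QW:
  assumes s: "sorted_wrt (<) (concat Gs)" and r: "runs_ok i (\<lambda>t. set (Gs ! t)) (length Gs) k"
    and W: "W \<subseteq> {..<length Gs}"
  shows "sorted_list_of_set (QW (\<lambda>t. set (Gs ! t)) W) = concat (map (nth Gs) (filter (\<lambda>t. t \<in> W) [0..<length Gs]))"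
proof -
  define A where "A = QW (\<lambda>t. set (Gs ! t)) W"
  have sub: "A \<subseteq> set (concat Gs)" unfolding A_def using QW_mono[OF W] QW_all by blast
  have "sorted_list_of_set A = filter (\<lambda>j. j \<in> A) (concat Gs)"
    by (rule sorted_list_subset_filter[OF s sub])
  also have "concat Gs = concat (map (nth Gs) [0..<length Gs])" by (simp add: map_nth)
  also have "filter (\<lambda>j. j \<in> A) (concat (map (nth Gs) [0..<length Gs]))
      = concat (map (\<lambda>t. filter (\<lambda>j. j \<in> A) (Gs ! t)) [0..<length Gs])"
    by (simp add: filter_concat comp_def)
  also have "\<dots> = concat (map (\<lambda>t. if t \<in> W then Gs ! t else []) [0..<length Gs])"
  proof (rule arg_cong[where f = concat], rule map_cong[OF refl])
    fix t assume "t \<in> set [0..<length Gs]"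
    then have t: "t < length Gs" by simp
    show "filter (\<lambda>j. j \<in> A) (Gs ! t) = (if t \<in> W then Gs ! t else [])"
    proof (cases "t \<in> W")
      case True
      then have "\<forall>j\<in>set (Gs ! t). j \<in> A" unfolding A_def QW_def by blast
      then show ?thesis using True by simp
    next
      case False
      have "\<forall>j\<in>set (Gs ! t). j \<notin> A"
      proof (intro ballI notI)
        fix j assume j: "j \<in> set (Gs ! t)" "j \<in> A"
        then obtain s where s: "s \<in> W" "j \<in> set (Gs ! s)" unfolding A_def QW_def by blast
        have "s \<noteq> t" "s < length Gs" using s False W by auto
        then show False using runs_disj[OF r t, of s] s j by blast
      qed
      then show ?thesis using False by simp
    qed
  qed
  also have "\<dots> = concat (map (nth Gs) (filter (\<lambda>t. t \<in> W) [0..<length Gs]))"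
    by (rule concat_map_if)
  finally show ?thesis unfolding A_def .
qed

lemma word_groups:
  assumes h: "\<And>k. unital_alg_hom smA smU (iota k)"
    and c: "\<forall>t\<in>set ts. \<forall>y\<in>set (Gs ! t). i y = i (hd (Gs ! t))"
  shows "prod_list (map (\<lambda>j. iota (i j) (X j)) (concat (map (nth Gs) ts)))
    = prod_list (map (\<lambda>t. iota (i (hd (Gs ! t))) (prod_list (map X (Gs ! t)))) ts)"
proof -
  have "prod_list (map (\<lambda>j. iota (i j) (X j)) (concat (map (nth Gs) ts)))
      = prod_list (map (\<lambda>t. prod_list (map (\<lambda>j. iota (i j) (X j)) (Gs ! t))) ts)"
    by (rule prod_list_concat_map)
  also have "\<dots> = prod_list (map (\<lambda>t. iota (i (hd (Gs ! t))) (prod_list (map X (Gs ! t)))) ts)"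
  proof (rule arg_cong[where f = prod_list], rule map_cong[OF refl])
    fix t assume t: "t \<in> set ts"
    define K where "K = i (hd (Gs ! t))"
    have e: "map (\<lambda>j. iota (i j) (X j)) (Gs ! t) = map (iota K) (map X (Gs ! t))"
      unfolding map_map comp_def K_def by (rule map_cong[OF refl]) (use c t in auto)
    have "prod_list (map (\<lambda>j. iota (i j) (X j)) (Gs ! t)) = prod_list (map (iota K) (map X (Gs ! t)))"
      by (simp only: e)
    also have "\<dots> = iota K (prod_list (map X (Gs ! t)))" by (rule hom_prod_list[OF h, symmetric])
    finally show "prod_list (map (\<lambda>j. iota (i j) (X j)) (Gs ! t)) = iota (i (hd (Gs ! t))) (prod_list (map X (Gs ! t)))"
      unfolding K_def .
  qed
  finally show ?thesis .
qed

lemma free_sysD: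
  assumes "free_exch_system smA phi smU psi iota"
  shows "cplx_algebra smU" "unital_lin_functional smU psi" "\<And>k. unital_alg_hom smA smU (iota k)"
    "\<And>k a. psi (iota k a) = phi a"
    "\<And>ks as. ks \<noteq> [] \<Longrightarrow> length as = length ks \<Longrightarrow>
        (\<forall>j. Suc j < length ks \<longrightarrow> ks ! j \<noteq> ks ! Suc j) \<Longrightarrow>
        (\<forall>a\<in>set as. phi a = 0) \<Longrightarrow> psi (prod_list (map2 iota ks as)) = 0"
  using assms unfolding free_exch_system_def by blast+

lemma GG_isolated:
  assumes r: "runs_ok i Rs m k" and m0: "0 < m"
  shows "GG i w Rs {..<m} {..<m} = 0"
proof -
  have E: "{\<tau>\<in>NCP (QW Rs {..<m}). kerle i \<tau> \<and> (\<forall>s\<in>{..<m}. \<not> isol (Rs s) \<tau>)} = {}"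
  proof (rule ccontr)
    assume "{\<tau>\<in>NCP (QW Rs {..<m}). kerle i \<tau> \<and> (\<forall>s\<in>{..<m}. \<not> isol (Rs s) \<tau>)} \<noteq> {}"
    then obtain \<tau> where t: "\<tau> \<in> NCP (QW Rs {..<m})" "kerle i \<tau>" "\<forall>s\<in>{..<m}. \<not> isol (Rs s) \<tau>" by blast
    have "\<exists>t<m. isol (Rs t) \<tau>" using isolation_aux r m0 t(1,2) by blast
    then show False using t(3) by auto
  qed
  show ?thesis unfolding GG_def E by simp
qed

lemma sum_pow_split:
  fixes f :: "nat set \<Rightarrow> complex"
  assumes "finite A"
  shows "(\<Sum>U\<in>Pow A. f U) = f {} + (\<Sum>U\<in>Pow A - {{}}. f U)"
  using assms by (simp add: sum.remove)

lemma main_formula: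
  fixes smA :: "complex \<Rightarrow> 'a::ring_1 \<Rightarrow> 'a" and phi :: "'a \<Rightarrow> complex"
    and smU :: "complex \<Rightarrow> 'u::ring_1 \<Rightarrow> 'u" and psi :: "'u \<Rightarrow> complex"
    and iota :: "nat \<Rightarrow> 'a \<Rightarrow> 'u" and i :: "nat \<Rightarrow> nat" and X :: "nat \<Rightarrow> 'a"
  assumes cA: "cplx_algebra smA" and ph: "unital_lin_functional smA phi"
    and fr: "free_exch_system smA phi smU psi iota"
  shows "finite Q \<Longrightarrow> psi (prod_list (map (\<lambda>j. iota (i j) (X j)) (sorted_list_of_set Q)))
      = (\<Sum>\<tau>\<in>{\<tau>\<in>NCP Q. kerle i \<tau>}. \<Prod>B\<in>\<tau>. kap phi X B)"
proof (induction "card Q" arbitrary: Q rule: less_induct)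
  case less
  have cU: "cplx_algebra smU" and ps: "unital_lin_functional smU psi"
    and h: "\<And>k. unital_alg_hom smA smU (iota k)" using free_sysD[OF fr] by auto
  define word where "word S = psi (prod_list (map (\<lambda>j. iota (i j) (X j)) (sorted_list_of_set S)))" for S
  define Psi where "Psi S = (\<Sum>\<tau>\<in>{\<tau>\<in>NCP S. kerle i \<tau>}. \<Prod>B\<in>\<tau>. kap phi X B)" for S
  show ?case
  proof (cases "Q = {}")
    case True
    have "kerle i {}" unfolding kerle_def by simp
    then have "{\<tau>\<in>NCP Q. kerle i \<tau>} = {{}}" using True by (auto simp: NCP_empty)
    then show ?thesis using True ulfD(3)[OF ps] by simp
  next
    case False
    define js where "js = sorted_list_of_set Q"
    have sj: "sorted_wrt (<) js" "set js = Q" unfolding js_def using less.prems by auto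
    define Gs where "Gs = grp i js"
    define m where "m = length Gs"
    define Rs where "Rs = (\<lambda>t. set (Gs ! t))"
    define k where "k = (\<lambda>t. i (hd (Gs ! t)))"
    define P where "P t = prod_list (map X (Gs ! t))" for t
    define c where "c t = phi (P t)" for t
    have cG: "concat Gs = js" unfolding Gs_def by (rule grp_concat)
    have sG: "sorted_wrt (<) (concat Gs)" using cG sj by simp
    have gne: "\<forall>g\<in>set Gs. g \<noteq> []" unfolding Gs_def using grp_nonempty by blast
    have gc: "\<forall>g\<in>set Gs. \<forall>y\<in>set g. i y = i (hd g)" unfolding Gs_def using grp_const by blast
    have ga: "\<forall>t. Suc t < length Gs \<longrightarrow> i (hd (Gs ! t)) \<noteq> i (hd (Gs ! Suc t))"
      unfolding Gs_def using grp_alt by blast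
    have r: "runs_ok i Rs m k" unfolding Rs_def k_def m_def by (rule runs_of_grp[OF sG gne gc ga])
    have m0: "0 < m"
    proof -
      have "js \<noteq> []" using sj False by auto
      then have "Gs \<noteq> []" using cG by auto
      then show ?thesis unfolding m_def by simp
    qed
    have QWall: "QW Rs {..<m} = Q" unfolding Rs_def m_def QW_all cG sj(2) ..
    have wordW: "word (QW Rs W) = psi (prod_list (map (\<lambda>t. iota (k t) (P t)) (filter (\<lambda>t. t \<in> W) [0..<m])))"
      if W: "W \<subseteq> {..<m}" for W
    proof -
      have "sorted_list_of_set (QW Rs W) = concat (map (nth Gs) (filter (\<lambda>t. t \<in> W) [0..<m]))"
        unfolding Rs_def m_def by (rule sorted_QW[OF sG r[unfolded Rs_def m_def] W[unfolded m_def]])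
      moreover have "\<forall>t\<in>set (filter (\<lambda>t. t \<in> W) [0..<m]). \<forall>y\<in>set (Gs ! t). i y = i (hd (Gs ! t))"
        using gc unfolding m_def by auto
      ultimately show ?thesis unfolding word_def k_def P_def
        using word_groups[where iota = iota and smA = smA and smU = smU, OF h, where ts = "filter (\<lambda>t. t \<in> W) [0..<m]" and Gs = Gs and i = i and X = X] by simp
    qed
    have fz: "psi (prod_list (map (\<lambda>t. iota (k t) (P t) - smU (c t) 1) [0..<m])) = 0"
    proof -
      define ks where "ks = map k [0..<m]"
      define as where "as = map (\<lambda>t. P t - smA (c t) 1) [0..<m]"
      have "map2 iota ks as = map (\<lambda>t. iota (k t) (P t - smA (c t) 1)) [0..<m]"
        unfolding ks_def as_def by (rule map2_map_map)
      also have "\<dots> = map (\<lambda>t. iota (k t) (P t) - smU (c t) 1) [0..<m]"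
        by (simp add: hom_diff[OF h] homD(3)[OF h] homD(4)[OF h])
      finally have e: "map2 iota ks as = map (\<lambda>t. iota (k t) (P t) - smU (c t) 1) [0..<m]" .
      have "psi (prod_list (map2 iota ks as)) = 0"
      proof (rule free_sysD(5)[OF fr])
        show "ks \<noteq> []" unfolding ks_def using m0 by simp
        show "length as = length ks" unfolding ks_def as_def by simp
        show "\<forall>j. Suc j < length ks \<longrightarrow> ks ! j \<noteq> ks ! Suc j"
          unfolding ks_def k_def using ga unfolding m_def by simp
        show "\<forall>a\<in>set as. phi a = 0"
          unfolding as_def c_def using ulf_diff[OF ph] ulfD(2)[OF ph] ulfD(3)[OF ph] by simp
      qed
      then show ?thesis using e by simp
    qed
    define f where "f U = (\<Prod>t\<in>U. - c t) * word (QW Rs ({..<m} - U))" for U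
    have sum_word: "(\<Sum>U\<in>Pow {..<m}. f U) = 0"
    proof -
      have "0 = psi (\<Sum>U\<in>Pow {..<m}. smU (\<Prod>t\<in>U. - c t) (prod_list (map (\<lambda>t. iota (k t) (P t)) (filter (\<lambda>t. t \<notin> U) [0..<m]))))"
        using fz expand_prod[OF cU, of "\<lambda>t. iota (k t) (P t)" c m] by simp
      also have "\<dots> = (\<Sum>U\<in>Pow {..<m}. (\<Prod>t\<in>U. - c t) * psi (prod_list (map (\<lambda>t. iota (k t) (P t)) (filter (\<lambda>t. t \<notin> U) [0..<m]))))"
        by (simp add: ulf_sum[OF ps] ulfD(2)[OF ps])
      also have "\<dots> = (\<Sum>U\<in>Pow {..<m}. f U)"
      proof (rule sum.cong[OF refl])
        fix U assume U: "U \<in> Pow {..<m}"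
        have "filter (\<lambda>t. t \<notin> U) [0..<m] = filter (\<lambda>t. t \<in> {..<m} - U) [0..<m]"
          by (rule filter_cong) auto
        then show "(\<Prod>t\<in>U. - c t) * psi (prod_list (map (\<lambda>t. iota (k t) (P t)) (filter (\<lambda>t. t \<notin> U) [0..<m]))) = f U"
          unfolding f_def using wordW[of "{..<m} - U"] by simp
      qed
      finally show ?thesis by simp
    qed
    define g where "g U = (\<Prod>t\<in>U. - c t) * Psi (QW Rs ({..<m} - U))" for U
    have sum_Psi: "(\<Sum>U\<in>Pow {..<m}. g U) = 0"
    proof -
      have c': "(\<Sum>\<tau>\<in>NCP (Rs t). \<Prod>B\<in>\<tau>. kap phi X B) = c t" if t: "t < m" for t
      proof -
        have gt: "Gs ! t \<in> set Gs" using t unfolding m_def by simp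
        have st: "sorted_wrt (<) (Gs ! t)" using sorted_concat_group[OF sG gt] .
        have "sorted_list_of_set (Rs t) = Gs ! t" unfolding Rs_def using st
          by (intro sorted_distinct_set_unique) (auto simp: strict_sorted_iff)
        then show ?thesis unfolding c_def P_def
          using moment_cumulant[of "Rs t" phi X] ulfD(3)[OF ph] unfolding Rs_def by simp
      qed
      have "0 = GG i (kap phi X) Rs {..<m} {..<m}" using GG_isolated[OF r m0] by simp
      also have "\<dots> = (\<Sum>U\<in>Pow {..<m}. (\<Prod>t\<in>U. - (\<Sum>\<tau>\<in>NCP (Rs t). \<Prod>B\<in>\<tau>. kap phi X B)) * GG i (kap phi X) Rs ({..<m} - U) {})"
        by (rule GG_pow[OF r]) auto
      also have "\<dots> = (\<Sum>U\<in>Pow {..<m}. g U)"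
      proof (rule sum.cong[OF refl])
        fix U assume U: "U \<in> Pow {..<m}"
        have "(\<Prod>t\<in>U. - (\<Sum>\<tau>\<in>NCP (Rs t). \<Prod>B\<in>\<tau>. kap phi X B)) = (\<Prod>t\<in>U. - c t)"
          using U c' by (intro prod.cong) auto
        moreover have "GG i (kap phi X) Rs ({..<m} - U) {} = Psi (QW Rs ({..<m} - U))"
          unfolding GG_def Psi_def by simp
        ultimately show "(\<Prod>t\<in>U. - (\<Sum>\<tau>\<in>NCP (Rs t). \<Prod>B\<in>\<tau>. kap phi X B)) * GG i (kap phi X) Rs ({..<m} - U) {} = g U"
          unfolding g_def by simp
      qed
      finally show ?thesis by simp
    qed
    have agree: "f U = g U" if U: "U \<in> Pow {..<m} - {{}}" for U
    proof -
      define S where "S = QW Rs ({..<m} - U)"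
      have Um: "U \<subseteq> {..<m}" "U \<noteq> {}" using U by auto
      then obtain t where t: "t \<in> U" "t < m" by blast
      have SQ: "S \<subseteq> Q" unfolding S_def using QW_mono[of "{..<m} - U" "{..<m}" Rs] QWall by blast
      have "Rs t \<subseteq> Q" using QW_mono[of "{t}" "{..<m}" Rs] QWall t unfolding QW_def by auto
      moreover have "Rs t \<noteq> {}" using runs_okD(1)[OF r t(2)] .
      moreover have "Rs t \<inter> S = {}"
      proof -
        { fix x assume x: "x \<in> Rs t" "x \<in> S"
          then obtain s where s: "s \<in> {..<m} - U" "x \<in> Rs s" unfolding S_def QW_def by blast
          then have "s \<noteq> t" "s < m" using t by auto
          then have False using runs_disj[OF r t(2), of s] x s by blast }
        then show ?thesis by blast
      qed
      ultimately have "S \<subset> Q" using SQ by blast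
      then have cS: "card S < card Q" using less.prems by (simp add: psubset_card_mono)
      have fS: "finite S" using SQ less.prems finite_subset by blast
      have "word S = Psi S" unfolding word_def Psi_def using less.hyps[OF cS fS] .
      then show ?thesis unfolding f_def g_def S_def by simp
    qed
    have "f {} + (\<Sum>U\<in>Pow {..<m} - {{}}. f U) = 0" using sum_word sum_pow_split[of "{..<m}" f] by simp
    moreover have "g {} + (\<Sum>U\<in>Pow {..<m} - {{}}. g U) = 0" using sum_Psi sum_pow_split[of "{..<m}" g] by simp
    moreover have "(\<Sum>U\<in>Pow {..<m} - {{}}. f U) = (\<Sum>U\<in>Pow {..<m} - {{}}. g U)"
      using agree by (rule sum.cong[OF refl])
    ultimately have "f {} = g {}" by (metis add_right_cancel)
    then have "word Q = Psi Q" unfolding f_def g_def using QWall by simp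
    then show ?thesis unfolding word_def Psi_def .
  qed
qed

lemma set_partitions_finite: "finite (set_partitions n)"
proof -
  have "set_partitions n \<subseteq> Pow (Pow {1..n})" unfolding set_partitions_def partition_on_def by auto
  then show ?thesis by (rule finite_subset) simp
qed

lemma part_disj: "partition_on A P \<Longrightarrow> B \<in> P \<Longrightarrow> C \<in> P \<Longrightarrow> B \<noteq> C \<Longrightarrow> B \<inter> C = {}"
  unfolding partition_on_def pairwise_def disjnt_def by blast

lemma part_ne: "partition_on A P \<Longrightarrow> B \<in> P \<Longrightarrow> B \<noteq> {}"
  unfolding partition_on_def by blast

lemma refines_antisym:
  assumes p: "partition_on A \<sigma>" "partition_on A \<tau>" and r: "refines \<sigma> \<tau>" "refines \<tau> \<sigma>"
  shows "\<sigma> = \<tau>"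
proof -
  have sub: "\<sigma> \<subseteq> \<tau>" if p1: "partition_on A \<sigma>" and p2: "partition_on A \<tau>"
    and r1: "refines \<sigma> \<tau>" and r2: "refines \<tau> \<sigma>" for \<sigma> \<tau>
  proof
    fix B assume B: "B \<in> \<sigma>"
    obtain C where C: "C \<in> \<tau>" "B \<subseteq> C" using r1 B unfolding refines_def by blast
    obtain D where D: "D \<in> \<sigma>" "C \<subseteq> D" using r2 C unfolding refines_def by blast
    have "B \<noteq> {}" using part_ne[OF p1 B] .
    then have "B \<inter> D \<noteq> {}" using C D by blast
    then have "B = D" using part_disj[OF p1 B D(1)] by blast
    then have "B = C" using C D by blast
    then show "B \<in> \<tau>" using C by simp
  qed
  show ?thesis using sub[OF p(1,2) r] sub[OF p(2,1) r(2,1)] by blast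
qed

lemma refines_trans: "refines x y \<Longrightarrow> refines y z \<Longrightarrow> refines x z"
  unfolding refines_def by (meson order_trans)

lemma porder_parts: "porder (set_partitions n) refines"
  unfolding porder_def
proof (intro conjI ballI impI)
  fix x assume "x \<in> set_partitions n"
  show "refines x x" unfolding refines_def by blast
next
  fix x y z assume "refines x y" "refines y z"
  then show "refines x z" by (rule refines_trans)
next
  fix x y assume "x \<in> set_partitions n" "y \<in> set_partitions n" "refines x y" "refines y x"
  then show "x = y" using refines_antisym unfolding set_partitions_def by blast
qed

lemma block_the:
  assumes p: "partition_on A \<sigma>" and x: "x \<in> A"
  shows "(THE B. B \<in> \<sigma> \<and> x \<in> B) \<in> \<sigma>" "x \<in> (THE B. B \<in> \<sigma> \<and> x \<in> B)"
    "\<And>C. C \<in> \<sigma> \<Longrightarrow> x \<in> C \<Longrightarrow> (THE B. B \<in> \<sigma> \<and> x \<in> B) = C"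
proof -
  obtain B where B: "B \<in> \<sigma>" "x \<in> B" using p x unfolding partition_on_def by blast
  have u: "\<And>C. C \<in> \<sigma> \<and> x \<in> C \<Longrightarrow> C = B" using part_disj[OF p] B by blast
  have th: "(THE B. B \<in> \<sigma> \<and> x \<in> B) = B"
    by (rule the_equality) (use B u in blast)+
  show "(THE B. B \<in> \<sigma> \<and> x \<in> B) \<in> \<sigma>" "x \<in> (THE B. B \<in> \<sigma> \<and> x \<in> B)" unfolding th using B by blast+
  show "\<And>C. C \<in> \<sigma> \<Longrightarrow> x \<in> C \<Longrightarrow> (THE B. B \<in> \<sigma> \<and> x \<in> B) = C"
  proof -
    fix C assume "C \<in> \<sigma>" "x \<in> C"
    then have "C = B" using u by blast
    then show "(THE B. B \<in> \<sigma> \<and> x \<in> B) = C" unfolding th by simp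
  qed
qed

lemma block_index_eq:
  assumes p: "partition_on {1..n} \<sigma>" and x: "x \<in> {1..n}" and y: "y \<in> {1..n}"
    and e: "block_index \<sigma> x = block_index \<sigma> y"
  shows "\<exists>C\<in>\<sigma>. x \<in> C \<and> y \<in> C"
proof -
  define Bx where "Bx = (THE B. B \<in> \<sigma> \<and> x \<in> B)"
  define By where "By = (THE B. B \<in> \<sigma> \<and> y \<in> B)"
  have Bx: "Bx \<in> \<sigma>" "x \<in> Bx" unfolding Bx_def using block_the(1,2)[OF p x] by auto
  have By: "By \<in> \<sigma>" "y \<in> By" unfolding By_def using block_the(1,2)[OF p y] by auto
  have sx: "Bx \<subseteq> {1..n}" using Bx(1) partition_onD1[OF p] by blast
  have sy: "By \<subseteq> {1..n}" using By(1) partition_onD1[OF p] by blast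
  have fx: "finite Bx" "Bx \<noteq> {}" using finite_subset[OF sx] part_ne[OF p Bx(1)] by auto
  have fy: "finite By" "By \<noteq> {}" using finite_subset[OF sy] part_ne[OF p By(1)] by auto
  have "Min Bx = Min By" using e unfolding block_index_def Bx_def By_def .
  then have "Min Bx \<in> Bx \<inter> By" using Min_in[OF fx] Min_in[OF fy] by simp
  then have "Bx = By" using part_disj[OF p Bx(1) By(1)] by blast
  then show ?thesis using Bx By by blast
qed

lemma kerle_refines:
  assumes s: "\<sigma> \<in> set_partitions n" and t: "\<tau> \<in> NCP {1..n}"
  shows "kerle (block_index \<sigma>) \<tau> \<longleftrightarrow> refines \<tau> \<sigma>"
proof
  have p: "partition_on {1..n} \<sigma>" using s unfolding set_partitions_def by simp
  assume k: "kerle (block_index \<sigma>) \<tau>"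
  show "refines \<tau> \<sigma>" unfolding refines_def
  proof
    fix B assume B: "B \<in> \<tau>"
    have BQ: "B \<subseteq> {1..n}" "B \<noteq> {}" using NCP_block[OF t B] by auto
    then obtain x where x: "x \<in> B" by blast
    define Bx where "Bx = (THE B. B \<in> \<sigma> \<and> x \<in> B)"
    have xn: "x \<in> {1..n}" using x BQ by blast
    have Bx: "Bx \<in> \<sigma>" "x \<in> Bx" unfolding Bx_def using block_the(1,2)[OF p xn] by auto
    have "B \<subseteq> Bx"
    proof
      fix y assume y: "y \<in> B"
      have yn: "y \<in> {1..n}" using y BQ by blast
      have "block_index \<sigma> x = block_index \<sigma> y" using k B x y unfolding kerle_def by blast
      then obtain C where C: "C \<in> \<sigma>" "x \<in> C" "y \<in> C" using block_index_eq[OF p xn yn] by blast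
      have "C = Bx" using block_the(3)[OF p xn C(1,2)] unfolding Bx_def by simp
      then show "y \<in> Bx" using C by simp
    qed
    then show "\<exists>C\<in>\<sigma>. B \<subseteq> C" using Bx by blast
  qed
next
  have p: "partition_on {1..n} \<sigma>" using s unfolding set_partitions_def by simp
  assume r: "refines \<tau> \<sigma>"
  show "kerle (block_index \<sigma>) \<tau>" unfolding kerle_def
  proof (intro ballI)
    fix B x y assume B: "B \<in> \<tau>" and x: "x \<in> B" and y: "y \<in> B"
    obtain C where C: "C \<in> \<sigma>" "B \<subseteq> C" using r B unfolding refines_def by blast
    have BQ: "B \<subseteq> {1..n}" using NCP_block[OF t B] by auto
    have "(THE D. D \<in> \<sigma> \<and> x \<in> D) = C" using block_the(3)[OF p _ C(1)] x y BQ C(2) by blast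
    moreover have "(THE D. D \<in> \<sigma> \<and> y \<in> D) = C" using block_the(3)[OF p _ C(1)] x y BQ C(2) by blast
    ultimately show "block_index \<sigma> x = block_index \<sigma> y" unfolding block_index_def by simp
  qed
qed

theorem proposition4p4:
  fixes smA :: "complex \<Rightarrow> 'a::ring_1 \<Rightarrow> 'a" and phi :: "'a \<Rightarrow> complex"
    and smU :: "complex \<Rightarrow> 'u::ring_1 \<Rightarrow> 'u" and psi :: "'u \<Rightarrow> complex"
    and iota :: "nat \<Rightarrow> 'a \<Rightarrow> 'u"
    and n :: nat and \<pi> :: "nat set set" and X :: "nat \<Rightarrow> 'a"
  assumes "cplx_algebra smA"
    and "unital_lin_functional smA phi"
    and "free_exch_system smA phi smU psi iota"
    and "\<pi> \<in> set_partitions n"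
    and "has_crossing \<pi>"
  shows "KF iota psi n \<pi> X = 0"
proof -
  note cA = assms(1) and ph = assms(2) and fr = assms(3) and pin = assms(4) and cr = assms(5)
  define P where "P = set_partitions n"
  define N where "N = NCP {1..n}"
  define wt where "wt \<tau> = (\<Prod>B\<in>\<tau>. kap phi X B)" for \<tau>
  define mu where "mu = moebius_part n"
  have NP: "N \<subseteq> P" unfolding N_def P_def NCP_def set_partitions_def by auto
  have finP: "finite P" unfolding P_def by (rule set_partitions_finite)
  have finN: "finite N" unfolding N_def by (rule NCP_finite) simp
  have po: "porder P refines" unfolding P_def by (rule porder_parts)
  have phiF_eq: "phiF iota psi n \<sigma> X = (\<Sum>\<tau>\<in>{\<tau>\<in>N. refines \<tau> \<sigma>}. wt \<tau>)" if s: "\<sigma> \<in> P" for \<sigma>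
  proof -
    have sl: "sorted_list_of_set {1..n} = [1..<Suc n]"
      using sorted_list_of_set_range[of 1 "Suc n"] by (simp add: atLeastLessThanSuc_atLeastAtMost)
    have "phiF iota psi n \<sigma> X = psi (prod_list (map (\<lambda>j. iota (block_index \<sigma> j) (X j)) (sorted_list_of_set {1..n})))"
      unfolding phiF_def sl ..
    also have "\<dots> = (\<Sum>\<tau>\<in>{\<tau>\<in>NCP {1..n}. kerle (block_index \<sigma>) \<tau>}. \<Prod>B\<in>\<tau>. kap phi X B)"
      by (rule main_formula[OF cA ph fr]) simp
    also have "{\<tau>\<in>NCP {1..n}. kerle (block_index \<sigma>) \<tau>} = {\<tau>\<in>N. refines \<tau> \<sigma>}"
      using kerle_refines[of \<sigma> n] s unfolding N_def P_def by blast
    finally show ?thesis unfolding wt_def .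
  qed
  have "KF iota psi n \<pi> X = (\<Sum>\<sigma>\<in>{\<sigma>\<in>P. refines \<sigma> \<pi>}. phiF iota psi n \<sigma> X * of_int (mu \<sigma> \<pi>))"
    unfolding KF_def P_def mu_def ..
  also have "\<dots> = (\<Sum>\<sigma>\<in>{\<sigma>\<in>P. refines \<sigma> \<pi>}. \<Sum>\<tau>\<in>{\<tau>\<in>N. refines \<tau> \<sigma>}. wt \<tau> * of_int (mu \<sigma> \<pi>))"
    by (rule sum.cong[OF refl]) (simp add: phiF_eq sum_distrib_right)
  also have "\<dots> = (\<Sum>\<tau>\<in>N. \<Sum>\<sigma>\<in>{\<sigma>\<in>{\<sigma>\<in>P. refines \<sigma> \<pi>}. refines \<tau> \<sigma>}. wt \<tau> * of_int (mu \<sigma> \<pi>))"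
    by (rule sum.swap_restrict) (use finP finN in auto)
  also have "\<dots> = (\<Sum>\<tau>\<in>N. wt \<tau> * of_int (\<Sum>\<sigma>\<in>{\<sigma>\<in>P. refines \<tau> \<sigma> \<and> refines \<sigma> \<pi>}. mu \<sigma> \<pi>))"
  proof (rule sum.cong[OF refl])
    fix \<tau> assume "\<tau> \<in> N"
    have "{\<sigma>\<in>{\<sigma>\<in>P. refines \<sigma> \<pi>}. refines \<tau> \<sigma>} = {\<sigma>\<in>P. refines \<tau> \<sigma> \<and> refines \<sigma> \<pi>}" by blast
    then show "(\<Sum>\<sigma>\<in>{\<sigma>\<in>{\<sigma>\<in>P. refines \<sigma> \<pi>}. refines \<tau> \<sigma>}. wt \<tau> * of_int (mu \<sigma> \<pi>))
        = wt \<tau> * of_int (\<Sum>\<sigma>\<in>{\<sigma>\<in>P. refines \<tau> \<sigma> \<and> refines \<sigma> \<pi>}. mu \<sigma> \<pi>)"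
      by (simp add: sum_distrib_left)
  qed
  also have "\<dots> = 0"
  proof (rule sum.neutral, rule ballI)
    fix \<tau> assume tN: "\<tau> \<in> N"
    have tP: "\<tau> \<in> P" using tN NP by blast
    have piP: "\<pi> \<in> P" using pin unfolding P_def .
    have "\<tau> \<noteq> \<pi>" using tN cr unfolding N_def NCP_def by auto
    have "(\<Sum>\<sigma>\<in>{\<sigma>\<in>P. refines \<tau> \<sigma> \<and> refines \<sigma> \<pi>}. mu \<sigma> \<pi>) = 0"
    proof (cases "refines \<tau> \<pi>")
      case True
      show ?thesis using moebius_dual[OF finP po tP piP True] \<open>\<tau> \<noteq> \<pi>\<close>
        unfolding mu_def moebius_part_def P_def by simp
    next
      case False
      have E: "{\<sigma>\<in>P. refines \<tau> \<sigma> \<and> refines \<sigma> \<pi>} = {}"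
        using False refines_trans by blast
      show ?thesis unfolding E by simp
    qed
    then show "wt \<tau> * of_int (\<Sum>\<sigma>\<in>{\<sigma>\<in>P. refines \<tau> \<sigma> \<and> refines \<sigma> \<pi>}. mu \<sigma> \<pi>) = 0" by simp
  qed
  finally show ?thesis .
qed

end
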